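(* Let $\mathcal{A}\in\mathbb{C}^{m\times m\times p}$ be a fixed Hermitian T-product tensor, let $\mathcal{X}\in\mathbb{C}^{m\times m\times p}$ be a random Hermitian T-product tensor with $\mathbb{E}\mathcal{X}=\mathcal{O}$, and let $\beta$ be a Rademacher random variable independent of $\mathcal{X}$. Then $$\mathbb{E}\,\mathrm{Tr}\,e^{\mathcal{A}+\mathcal{X}}\leq\mathbb{E}\,\mathrm{Tr}\,e^{\mathcal{A}+2\beta\mathcal{X}}.$$
   Context: For $\mathcal{A}\in\mathbb{C}^{m\times n\times p}$ with frontal slices $A^{(1)},\dots,A^{(p)}$, $\mathrm{bcirc}(\mathcal{A})\in\mathbb{C}^{mp\times np}$ is the block circulant matrix whose $(r,s)$ block is $A^{(((r-s)\bmod p)+1)}$. The T-product $\mathcal{A}\star\mathcal{B}$ is the tensor with $\mathrm{bcirc}(\mathcal{A}\star\mathcal{B})=\mathrm{bcirc}(\mathcal{A})\mathrm{bcirc}(\mathcal{B})$; powers are T-product powers and $e^{\mathcal{A}}=\sum_{k\ge0}\mathcal{A}^k/k!$ with $\mathcal{A}^0$ the identity tensor (first frontal slice $I_m$, other slices zero). The conjugate transpose $\mathcal{A}^{\mathrm H}$ is obtained by conjugate-transposing every frontal slice and reversing the order of slices $2,\dots,p$; $\mathcal{A}$ is Hermitian if $\mathcal{A}^{\mathrm H}=\mathcal{A}$. $\mathrm{Tr}(\mathcal{A})$ denotes the trace of $\mathrm{bcirc}(\mathcal{A})$ (equivalently $p$ times the trace of the first frontal slice). $\mathcal{O}$ is the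 zero tensor; expectation is entrywise. *)

theory Defs
  imports "HOL-Probability.Probability" "HOL-Library.Complex_Order"
begin

text \<open>A third-order tensor in C^{m x n x p} is represented by its entry function:
  T i j k is the (i,j) entry of the (k+1)-th frontal slice (0-based indices
  i < m, j < n, k < p). Entries outside this range are irrelevant.\<close>

type_synonym tensor = "nat \<Rightarrow> nat \<Rightarrow> nat \<Rightarrow> complex"

definition cyc :: "nat \<Rightarrow> nat \<Rightarrow> nat \<Rightarrow> nat" where
  "cyc p k s = nat ((int k - int s) mod int p)"

text \<open>bcirc(A) for A in C^{m x n x p}: the (r,s) block is slice ((r - s) mod p);
  entry (a,b) with a = r*m + i, b = s*n + j.\<close>
definition bcirc :: "nat \<Rightarrow> nat \<Rightarrow> nat \<Rightarrow> tensor \<Rightarrow> nat \<Rightarrow> nat \<Rightarrow> complex" where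
  "bcirc m n p A a b = A (a mod m) (b mod n) (cyc p (a div m) (b div n))"

text \<open>T-product of A in C^{m x n x p} and B in C^{n x l x p}: the tensor whose
  bcirc is bcirc(A) bcirc(B), i.e. slice k is sum over s of A^((k-s) mod p) B^(s).\<close>
definition tprod :: "nat \<Rightarrow> nat \<Rightarrow> tensor \<Rightarrow> tensor \<Rightarrow> tensor" where
  "tprod n p A B = (\<lambda>i j k. \<Sum>s<p. \<Sum>l<n. A i l (cyc p k s) * B l j s)"

definition tid :: tensor where
  "tid = (\<lambda>i j k. if i = j \<and> k = 0 then 1 else 0)"

primrec tpow :: "nat \<Rightarrow> nat \<Rightarrow> tensor \<Rightarrow> nat \<Rightarrow> tensor" where
  "tpow m p A 0 = tid"
| "tpow m p A (Suc q) = tprod m p A (tpow m p A q)"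

definition texp :: "nat \<Rightarrow> nat \<Rightarrow> tensor \<Rightarrow> tensor" where
  "texp m p A = (\<lambda>i j k. \<Sum>q. tpow m p A q i j k / of_nat (fact q))"

text \<open>Conjugate transpose: conjugate-transpose each slice, reverse slices 2..p.\<close>
definition tconjT :: "nat \<Rightarrow> tensor \<Rightarrow> tensor" where
  "tconjT p A = (\<lambda>i j k. cnj (A j i (cyc p 0 k)))"

definition hermitian_tensor :: "nat \<Rightarrow> nat \<Rightarrow> tensor \<Rightarrow> bool" where
  "hermitian_tensor m p A \<longleftrightarrow> (\<forall>i<m. \<forall>j<m. \<forall>k<p. tconjT p A i j k = A i j k)"

definition tTr :: "nat \<Rightarrow> nat \<Rightarrow> tensor \<Rightarrow> complex" where
  "tTr m p A = (\<Sum>a<m*p. bcirc m m p A a a)"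

end

theory Submission
  imports Defs "Jordan_Normal_Form.Char_Poly"
begin

type_synonym cmat = "nat \<Rightarrow> nat \<Rightarrow> complex"

definition mm :: "nat \<Rightarrow> cmat \<Rightarrow> cmat \<Rightarrow> cmat" where
  "mm n P Q = (\<lambda>i j. \<Sum>k<n. P i k * Q k j)"

definition adj :: "cmat \<Rightarrow> cmat" where
  "adj P = (\<lambda>i j. cnj (P j i))"

definition idm :: cmat where
  "idm = (\<lambda>i j. if i = j then 1 else 0)"

definition unitary :: "nat \<Rightarrow> cmat \<Rightarrow> bool" where
  "unitary n U \<longleftrightarrow> (\<forall>i<n. \<forall>j<n. mm n (adj U) U i j = idm i j) \<and> (\<forall>i<n. \<forall>j<n. mm n U (adj U) i j = idm i j)"

definition herm :: "nat \<Rightarrow> cmat \<Rightarrow> bool" where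
  "herm n P \<longleftrightarrow> (\<forall>i<n. \<forall>j<n. cnj (P j i) = P i j)"

definition dg :: "(nat \<Rightarrow> real) \<Rightarrow> cmat" where
  "dg d = (\<lambda>i j. if i = j then complex_of_real (d i) else 0)"

lemma mm_assoc: "mm n (mm n P Q) R i j = mm n P (mm n Q R) i j"
  unfolding mm_def
  by (simp add: sum_distrib_left sum_distrib_right mult.assoc) (rule sum.swap)

lemma mm_idm_left: "i < n \<Longrightarrow> mm n idm P i j = P i j"
proof -
  assume i: "i < n"
  have "mm n idm P i j = (\<Sum>k<n. if i = k then P k j else 0)"
    unfolding mm_def idm_def by (rule sum.cong) auto
  also have "\<dots> = P i j" using i by (simp add: sum.delta)
  finally show ?thesis .
qed

lemma mm_idm_right: "j < n \<Longrightarrow> mm n P idm i j = P i j"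
proof -
  assume i: "j < n"
  have "mm n P idm i j = (\<Sum>k<n. if k = j then P i k else 0)"
    unfolding mm_def idm_def by (rule sum.cong) auto
  also have "\<dots> = P i j" using i by (simp add: sum.delta')
  finally show ?thesis .
qed

lemma mm_cong: "(\<And>k. k < n \<Longrightarrow> P i k = P' i k) \<Longrightarrow> (\<And>k. k < n \<Longrightarrow> Q k j = Q' k j) \<Longrightarrow>
   mm n P Q i j = mm n P' Q' i j"
  unfolding mm_def by (auto intro: sum.cong)

lemma eigvec_exists:
  fixes n :: nat and P :: cmat
  assumes "0 < n"
  shows "\<exists>e v. (\<exists>i<n. v i \<noteq> 0) \<and> (\<forall>i<n. (\<Sum>j<n. P i j * v j) = e * v i)"
proof -
  define A where "A = mat n n (\<lambda>(i,j). P i j)"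
  have A: "A \<in> carrier_mat n n" unfolding A_def by auto
  from char_poly_factorized[OF A] obtain as where
    cp: "char_poly A = (\<Prod>a\<leftarrow>as. [:- a, 1:])" and len: "length as = n" by auto
  then obtain e where e: "e \<in> set as" using assms by (cases as) auto
  have "poly (char_poly A) e = 0" unfolding cp using e
    by (induction as) (auto simp: poly_prod_list)
  hence ev: "eigenvalue A e" using eigenvalue_root_char_poly[OF A] by simp
  define w where "w = find_eigenvector A e"
  have "eigenvector A w e" using find_eigenvector[OF A ev] w_def by simp
  hence w: "w \<in> carrier_vec n" "w \<noteq> 0\<^sub>v n" "A *\<^sub>v w = e \<cdot>\<^sub>v w"
    unfolding eigenvector_def using A by auto
  have "\<exists>i<n. w $ i \<noteq> 0"
  proof (rule ccontr)
    assume "\<not> ?thesis"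
    hence "w = 0\<^sub>v n" using w(1) by (intro eq_vecI) auto
    thus False using w(2) by simp
  qed
  moreover have "\<forall>i<n. (\<Sum>j<n. P i j * w $ j) = e * w $ i"
  proof (intro allI impI)
    fix i assume i: "i < n"
    have "(A *\<^sub>v w) $ i = (e \<cdot>\<^sub>v w) $ i" using w(3) by simp
    thus "(\<Sum>j<n. P i j * w $ j) = e * w $ i"
      using i w(1) A unfolding A_def
      by (simp add: scalar_prod_def row_def atLeast0LessThan)
  qed
  ultimately show ?thesis by blast
qed

lemma adj_mm: "adj (mm n U V) i j = mm n (adj V) (adj U) i j"
  unfolding adj_def mm_def by (simp add: mult.commute)

lemma unitary_mm:
  assumes "unitary n U" "unitary n V"
  shows "unitary n (mm n U V)"
proof -
  have 1: "mm n (adj (mm n U V)) (mm n U V) i j = idm i j" if "i < n" "j < n" for i j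
  proof -
    have "mm n (adj (mm n U V)) (mm n U V) i j = mm n (mm n (adj V) (adj U)) (mm n U V) i j"
      by (rule mm_cong) (auto simp: adj_mm)
    also have "\<dots> = mm n (adj V) (mm n (adj U) (mm n U V)) i j" by (rule mm_assoc)
    also have "\<dots> = mm n (adj V) V i j"
    proof (rule mm_cong)
      fix k assume k: "k < n"
      have "mm n (adj U) (mm n U V) k j = mm n (mm n (adj U) U) V k j" by (rule mm_assoc[symmetric])
      also have "\<dots> = mm n idm V k j" using assms(1) k by (intro mm_cong) (auto simp: unitary_def)
      also have "\<dots> = V k j" using k by (rule mm_idm_left)
      finally show "mm n (adj U) (mm n U V) k j = V k j" .
    qed auto
    also have "\<dots> = idm i j" using assms(2) that by (auto simp: unitary_def)
    finally show ?thesis .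
  qed
  have 2: "mm n (mm n U V) (adj (mm n U V)) i j = idm i j" if "i < n" "j < n" for i j
  proof -
    have "mm n (mm n U V) (adj (mm n U V)) i j = mm n (mm n U V) (mm n (adj V) (adj U)) i j"
      by (rule mm_cong) (auto simp: adj_mm)
    also have "\<dots> = mm n U (mm n V (mm n (adj V) (adj U))) i j" by (rule mm_assoc)
    also have "\<dots> = mm n U (adj U) i j"
    proof (rule mm_cong)
      fix k assume k: "k < n"
      have "mm n V (mm n (adj V) (adj U)) k j = mm n (mm n V (adj V)) (adj U) k j" by (rule mm_assoc[symmetric])
      also have "\<dots> = mm n idm (adj U) k j" using assms(2) k by (intro mm_cong) (auto simp: unitary_def)
      also have "\<dots> = adj U k j" using k by (rule mm_idm_left)
      finally show "mm n V (mm n (adj V) (adj U)) k j = adj U k j" .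
    qed auto
    also have "\<dots> = idm i j" using assms(1) that by (auto simp: unitary_def)
    finally show ?thesis .
  qed
  show ?thesis using 1 2 unfolding unitary_def by auto
qed

lemma udu: "mm n (mm n U (dg d)) (adj U) i j = (\<Sum>k<n. U i k * complex_of_real (d k) * cnj (U j k))"
proof -
  have "mm n (mm n U (dg d)) (adj U) i j = (\<Sum>k<n. (\<Sum>l<n. U i l * dg d l k) * cnj (U j k))"
    unfolding mm_def adj_def ..
  also have "\<dots> = (\<Sum>k<n. U i k * complex_of_real (d k) * cnj (U j k))"
  proof (rule sum.cong[OF refl])
    fix k assume k: "k \<in> {..<n}"
    have "(\<Sum>l<n. U i l * dg d l k) = (\<Sum>l<n. if l = k then U i l * complex_of_real (d k) else 0)"
      unfolding dg_def by (rule sum.cong) auto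
    also have "\<dots> = U i k * complex_of_real (d k)" using k by (simp add: sum.delta')
    finally show "(\<Sum>l<n. U i l * dg d l k) * cnj (U j k) = U i k * complex_of_real (d k) * cnj (U j k)" by simp
  qed
  finally show ?thesis .
qed

lemma herm_HPH:
  assumes "herm n H" "herm n P"
  shows "herm n (mm n (mm n H P) H)"
  unfolding herm_def
proof (intro allI impI)
  fix i j assume ij: "i < n" "j < n"
  have "cnj (mm n (mm n H P) H j i) = adj (mm n (mm n H P) H) i j" by (simp add: adj_def)
  also have "\<dots> = mm n (adj H) (adj (mm n H P)) i j" by (rule adj_mm)
  also have "\<dots> = mm n H (mm n P H) i j"
  proof (rule mm_cong)
    fix k assume k: "k < n"
    show "adj H i k = H i k" using assms(1) ij k by (auto simp: herm_def adj_def)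
    have "adj (mm n H P) k j = mm n (adj P) (adj H) k j" by (rule adj_mm)
    also have "\<dots> = mm n P H k j" using assms ij k by (intro mm_cong) (auto simp: herm_def adj_def)
    finally show "adj (mm n H P) k j = mm n P H k j" .
  qed
  also have "\<dots> = mm n (mm n H P) H i j" by (rule mm_assoc[symmetric])
  finally show "cnj (mm n (mm n H P) H j i) = mm n (mm n H P) H i j" .
qed

lemma rank1_sq:
  fixes x y :: "nat \<Rightarrow> complex"
  assumes "i < n" "j < n" "(\<Sum>k<n. y k * x k) = 2"
  shows "mm n (\<lambda>i j. idm i j - x i * y j) (\<lambda>i j. idm i j - x i * y j) i j = idm i j"
proof -
  have "mm n (\<lambda>i j. idm i j - x i * y j) (\<lambda>i j. idm i j - x i * y j) i j
     = (\<Sum>k<n. idm i k * idm k j) - (\<Sum>k<n. idm i k * (x k * y j)) - (\<Sum>k<n. x i * y k * idm k j)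
       + x i * (\<Sum>k<n. y k * x k) * y j"
    unfolding mm_def
    by (simp add: algebra_simps sum.distrib sum_subtractf sum_distrib_left sum_distrib_right)
  also have "(\<Sum>k<n. idm i k * idm k j) = idm i j" using mm_idm_left[OF assms(1), of idm j]
    by (simp add: mm_def)
  also have "(\<Sum>k<n. idm i k * (x k * y j)) = x i * y j"
    using mm_idm_left[OF assms(1), of "\<lambda>k j. x k * y j" j] by (simp add: mm_def)
  also have "(\<Sum>k<n. x i * y k * idm k j) = x i * y j"
    using mm_idm_right[OF assms(2), of "\<lambda>i k. x i * y k" i] by (simp add: mm_def)
  finally show ?thesis using assms(3) by simp
qed

lemma householder:
  fixes u :: "nat \<Rightarrow> complex"
  assumes n: "0 < n" and u1: "(\<Sum>i<n. cnj (u i) * u i) = 1"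
  shows "\<exists>H c. herm n H \<and> (\<forall>i<n. \<forall>j<n. mm n H H i j = idm i j) \<and> (\<forall>k<n. H k 0 = c * u k)"
proof -
  define a where "a = cmod (u 0)"
  define ph where "ph = (if u 0 = 0 then 1 else u 0 / complex_of_real a)"
  have a0: "a \<ge> 0" unfolding a_def by simp
  have u0: "u 0 = complex_of_real a * ph"
    by (cases "u 0 = 0") (auto simp: ph_def a_def)
  have ph1: "cnj ph * ph = 1"
  proof (cases "u 0 = 0")
    case False
    hence "a \<noteq> 0" unfolding a_def by simp
    have "cnj ph * ph = (cnj (u 0) * u 0) / complex_of_real (a * a)"
      using False unfolding ph_def by (simp add: field_simps)
    also have "cnj (u 0) * u 0 = complex_of_real (a * a)"
      unfolding a_def using complex_norm_square[of "u 0"] by (simp add: power2_eq_square mult.commute)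
    finally show ?thesis using \<open>a \<noteq> 0\<close> by simp
  qed (simp add: ph_def)
  define w where "w k = u k + ph * idm k 0" for k
  define t where "t = complex_of_real (2 + 2 * a)"
  have t0: "t \<noteq> 0" using a0 unfolding t_def by (metis add_nonneg_nonneg of_real_eq_0_iff zero_le_numeral mult_nonneg_nonneg add_pos_nonneg zero_less_numeral less_irrefl)
  have cnjt: "cnj t = t" unfolding t_def by simp
  obtain n' where n': "n = Suc n'" using n by (cases n) auto
  have sumw: "(\<Sum>k<n. cnj (w k) * w k) = t"
  proof -
    have "(\<Sum>k<n. cnj (w k) * w k) = cnj (w 0) * w 0 + (\<Sum>k<n'. cnj (u (Suc k)) * u (Suc k))"
      unfolding n' sum.lessThan_Suc_shift by (simp add: w_def idm_def)
    moreover have "1 = cnj (u 0) * u 0 + (\<Sum>k<n'. cnj (u (Suc k)) * u (Suc k))"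
      using u1 unfolding n' sum.lessThan_Suc_shift by simp
    moreover have "cnj (w 0) * w 0 = cnj (u 0) * u 0 + 2 * complex_of_real a + 1"
      unfolding w_def u0 idm_def using ph1 by (simp add: algebra_simps)
    ultimately show ?thesis unfolding t_def by (simp add: algebra_simps)
  qed
  define y where "y k = 2 * cnj (w k) / t" for k
  define H where "H i j = idm i j - w i * y j" for i j
  have "herm n H" unfolding herm_def H_def y_def idm_def using cnjt
    by (auto simp: mult.commute)
  moreover have "\<forall>i<n. \<forall>j<n. mm n H H i j = idm i j"
  proof (intro allI impI)
    fix i j assume ij: "i < n" "j < n"
    have "(\<Sum>k<n. y k * w k) = 2 * (\<Sum>k<n. cnj (w k) * w k) / t"
      unfolding y_def by (simp add: sum_distrib_left sum_divide_distrib mult.assoc)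
    also have "\<dots> = 2" using sumw t0 by simp
    finally have "(\<Sum>k<n. y k * w k) = 2" .
    from rank1_sq[OF ij this] show "mm n H H i j = idm i j"
      unfolding H_def[abs_def] .
  qed
  moreover have "\<forall>k<n. H k 0 = - cnj ph * u k"
  proof (intro allI impI)
    fix k assume k: "k < n"
    have cw0: "cnj (w 0) = complex_of_real (1 + a) * cnj ph"
      unfolding w_def u0 by (simp add: idm_def algebra_simps)
    have tt: "t = 2 * complex_of_real (1 + a)" unfolding t_def by simp
    have a1: "complex_of_real (1 + a) \<noteq> 0" using a0 by (simp only: of_real_eq_0_iff)
    have "y 0 = (2 * complex_of_real (1+a)) * cnj ph / (2 * complex_of_real (1 + a))"
      unfolding y_def cw0 tt by (simp only: mult.assoc)
    also have "\<dots> = cnj ph" by (rule nonzero_mult_div_cancel_left) (use a1 in \<open>simp only: mult_eq_0_iff\<close>, simp)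
    finally have "y 0 = cnj ph" .
    hence "H k 0 = idm k 0 - (u k + ph * idm k 0) * cnj ph" unfolding H_def w_def by simp
    also have "\<dots> = - cnj ph * u k" using ph1 by (simp add: algebra_simps idm_def)
    finally show "H k 0 = - cnj ph * u k" .
  qed
  ultimately show ?thesis by blast
qed

lemma herm_unitary: "herm n H \<Longrightarrow> (\<forall>i<n. \<forall>j<n. mm n H H i j = idm i j) \<Longrightarrow> unitary n H"
proof -
  assume h: "herm n H" and hh: "\<forall>i<n. \<forall>j<n. mm n H H i j = idm i j"
  have a: "adj H i j = H i j" if "i < n" "j < n" for i j using h that by (auto simp: herm_def adj_def)
  show ?thesis unfolding unitary_def
  proof (intro conjI allI impI)
    fix i j assume ij: "i < n" "j < n"
    have "mm n (adj H) H i j = mm n H H i j" by (rule mm_cong) (use ij in \<open>auto simp: a\<close>)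
    then show "mm n (adj H) H i j = idm i j" using hh ij by simp
    have "mm n H (adj H) i j = mm n H H i j" by (rule mm_cong) (use ij in \<open>auto simp: a\<close>)
    then show "mm n H (adj H) i j = idm i j" using hh ij by simp
  qed
qed

lemma spectral:
  fixes P :: cmat
  assumes "herm n P"
  shows "\<exists>U d. unitary n U \<and> (\<forall>i<n. \<forall>j<n. P i j = mm n (mm n U (dg d)) (adj U) i j)"
  using assms
proof (induction n arbitrary: P)
  case 0
  show ?case by (auto simp: unitary_def)
next
  case (Suc n P)
  define N where "N = Suc n"
  have hP: "herm N P" using Suc.prems N_def by simp
  obtain e v where v0: "\<exists>i<N. v i \<noteq> 0" and ev: "\<forall>i<N. (\<Sum>j<N. P i j * v j) = e * v i"
    using eigvec_exists[of N P] N_def by auto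
  define r where "r = sqrt (\<Sum>i<N. (cmod (v i))^2)"
  obtain i0 where i0: "i0 < N" "v i0 \<noteq> 0" using v0 by auto
  have "(\<Sum>i<N. (cmod (v i))^2) > 0"
    by (rule sum_pos2[where i=i0]) (use i0 in auto)
  hence r0: "r > 0" unfolding r_def by simp
  define u where "u i = v i / complex_of_real r" for i
  have u1: "(\<Sum>i<N. cnj (u i) * u i) = 1"
  proof -
    have t: "cnj (u i) * u i = complex_of_real ((cmod (v i))^2) / complex_of_real (r^2)" for i
    proof -
      have "cnj (v i) * v i = complex_of_real ((cmod (v i))^2)" by (subst complex_norm_square) (rule mult.commute)
      thus ?thesis unfolding u_def by (simp add: power2_eq_square)
    qed
    have "(\<Sum>i<N. cnj (u i) * u i) = (\<Sum>i<N. complex_of_real ((cmod (v i))^2)) / complex_of_real (r^2)"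
      unfolding t by (simp add: sum_divide_distrib)
    also have "\<dots> = complex_of_real ((\<Sum>i<N. (cmod (v i))^2) / r^2)" by simp
    also have "(\<Sum>i<N. (cmod (v i))^2) / r^2 = 1" unfolding r_def
      using \<open>(\<Sum>i<N. (cmod (v i))^2) > 0\<close> by simp
    finally show ?thesis by simp
  qed
  have eu: "(\<Sum>j<N. P i j * u j) = e * u i" if "i < N" for i
    using ev that unfolding u_def by (simp add: sum_divide_distrib[symmetric] mult.assoc)
  obtain H c where hH: "herm N H" and HH: "\<forall>i<N. \<forall>j<N. mm N H H i j = idm i j"
    and Hc: "\<forall>k<N. H k 0 = c * u k"
    using householder[OF _ u1] N_def by auto
  define B where "B = mm N (mm N H P) H"
  have hB: "herm N B" unfolding B_def by (rule herm_HPH[OF hH hP])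
  have Bi0: "B i 0 = e * idm i 0" if "i < N" for i
  proof -
    have "B i 0 = mm N H (mm N P H) i 0" unfolding B_def by (rule mm_assoc)
    also have "\<dots> = mm N H (\<lambda>l j. e * H l j) i 0"
    proof (rule mm_cong)
      fix l assume l: "l < N"
      have "mm N P H l 0 = (\<Sum>k<N. P l k * (c * u k))" unfolding mm_def using Hc by simp
      also have "\<dots> = c * (\<Sum>k<N. P l k * u k)" by (simp add: sum_distrib_left mult_ac)
      also have "\<dots> = c * (e * u l)" using eu[OF l] by simp
      also have "\<dots> = e * H l 0" using Hc l by simp
      finally show "mm N P H l 0 = e * H l 0" .
    qed auto
    also have "\<dots> = e * mm N H H i 0" unfolding mm_def by (simp add: sum_distrib_left algebra_simps)
    also have "\<dots> = e * idm i 0" using HH that N_def by simp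
    finally show ?thesis .
  qed
  have B00: "B 0 0 = e" using Bi0[of 0] N_def by (simp add: idm_def)
  have "cnj (B 0 0) = B 0 0" using hB N_def by (simp add: herm_def)
  hence ereal: "cnj e = e" using B00 by simp
  have B0j: "B 0 j = e * idm 0 j" if "j < N" for j
  proof -
    have "B 0 j = cnj (B j 0)" using hB that N_def by (simp add: herm_def)
    also have "\<dots> = cnj (e * idm j 0)" using Bi0[OF that] by simp
    also have "\<dots> = e * idm 0 j" using ereal by (simp add: idm_def)
    finally show ?thesis .
  qed
  define A' where "A' i j = B (Suc i) (Suc j)" for i j
  have "herm n A'" using hB unfolding herm_def A'_def N_def by auto
  from Suc.IH[OF this] obtain U' d' where U': "unitary n U'"
    and A'd: "\<forall>i<n. \<forall>j<n. A' i j = mm n (mm n U' (dg d')) (adj U') i j" by auto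
  define K where "K i j = (if i = 0 \<and> j = 0 then 1 else if i = 0 \<or> j = 0 then 0 else U' (i-1) (j-1))" for i j
  define d where "d k = (if k = 0 then Re e else d' (k-1))" for k
  have K00: "K 0 0 = 1" and K0S: "K 0 (Suc j) = 0" and KS0: "K (Suc i) 0 = 0" and KSS: "K (Suc i) (Suc j) = U' i j" for i j
    unfolding K_def by auto
  have unK: "unitary N K"
    unfolding unitary_def
  proof (intro conjI allI impI)
    fix i j assume ij: "i < N" "j < N"
    show "mm N (adj K) K i j = idm i j"
      using ij U' unfolding N_def mm_def adj_def unitary_def
      by (cases i; cases j) (auto simp: sum.lessThan_Suc_shift K00 K0S KS0 KSS idm_def simp del: sum.lessThan_Suc)
    show "mm N K (adj K) i j = idm i j"
      using ij U' unfolding N_def mm_def adj_def unitary_def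
      by (cases i; cases j) (auto simp: sum.lessThan_Suc_shift K00 K0S KS0 KSS idm_def simp del: sum.lessThan_Suc)
  qed
  have BK: "B i j = mm N (mm N K (dg d)) (adj K) i j" if "i < N" "j < N" for i j
  proof -
    have "Im e = 0" using arg_cong[OF ereal, of Im] by simp
    hence e: "e = complex_of_real (Re e)" by (simp add: complex_eq_iff)
    have "mm N (mm N K (dg d)) (adj K) i j = (\<Sum>k<N. K i k * complex_of_real (d k) * cnj (K j k))"
      by (rule udu)
    also have "\<dots> = B i j"
    proof (cases i)
      case 0
      then show ?thesis using B0j[OF that(2)] e
        by (cases j) (simp_all add: N_def sum.lessThan_Suc_shift K00 K0S KS0 KSS d_def idm_def del: sum.lessThan_Suc)
    next
      case (Suc i')
      show ?thesis
      proof (cases j)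
        case 0
        then show ?thesis using Bi0[OF that(1)] e Suc
          by (simp add: N_def sum.lessThan_Suc_shift K00 K0S KS0 KSS d_def idm_def del: sum.lessThan_Suc)
      next
        case (Suc j')
        have "B i j = A' i' j'" using Suc \<open>i = Suc i'\<close> A'_def by simp
        also have "\<dots> = mm n (mm n U' (dg d')) (adj U') i' j'" using A'd that Suc \<open>i = Suc i'\<close> N_def by simp
        also have "\<dots> = (\<Sum>k<n. U' i' k * complex_of_real (d' k) * cnj (U' j' k))" by (rule udu)
        finally show ?thesis using Suc \<open>i = Suc i'\<close>
          by (simp add: N_def sum.lessThan_Suc_shift K00 K0S KS0 KSS d_def del: sum.lessThan_Suc)
      qed
    qed
    finally show ?thesis by simp
  qed
  define U where "U = mm N H K"
  have unH: "unitary N H" by (rule herm_unitary[OF hH HH])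
  have unU: "unitary N U" unfolding U_def by (rule unitary_mm[OF unH unK])
  have aH: "adj H i j = H i j" if "i < N" "j < N" for i j using hH that by (auto simp: herm_def adj_def)
  have "P i j = mm N (mm N U (dg d)) (adj U) i j" if ij: "i < N" "j < N" for i j
  proof -
    let ?D = "dg d"
    have "mm N (mm N U ?D) (adj U) i j = mm N (mm N H (mm N K ?D)) (mm N (adj K) H) i j"
    proof (rule mm_cong)
      fix k assume k: "k < N"
      show "mm N U ?D i k = mm N H (mm N K ?D) i k" unfolding U_def by (rule mm_assoc)
      have "adj U k j = mm N (adj K) (adj H) k j" unfolding U_def by (rule adj_mm)
      also have "\<dots> = mm N (adj K) H k j" using ij by (intro mm_cong) (auto simp: aH)
      finally show "adj U k j = mm N (adj K) H k j" .
    qed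
    also have "\<dots> = mm N H (mm N (mm N K ?D) (mm N (adj K) H)) i j" by (rule mm_assoc)
    also have "\<dots> = mm N H (mm N B H) i j"
    proof (rule mm_cong)
      fix l assume l: "l < N"
      have "mm N (mm N K ?D) (mm N (adj K) H) l j = mm N (mm N (mm N K ?D) (adj K)) H l j"
        by (rule mm_assoc[symmetric])
      also have "\<dots> = mm N B H l j" using l by (intro mm_cong) (auto simp: BK)
      finally show "mm N (mm N K ?D) (mm N (adj K) H) l j = mm N B H l j" .
    qed auto
    also have "\<dots> = mm N (mm N H B) H i j" by (rule mm_assoc[symmetric])
    also have "\<dots> = mm N (mm N P H) H i j"
    proof (rule mm_cong)
      fix k assume k: "k < N"
      have "mm N H B i k = mm N H (mm N H (mm N P H)) i k" unfolding B_def
        by (rule mm_cong) (simp_all add: mm_assoc)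
      also have "\<dots> = mm N (mm N H H) (mm N P H) i k" by (rule mm_assoc[symmetric])
      also have "\<dots> = mm N idm (mm N P H) i k" using HH ij by (intro mm_cong) auto
      also have "\<dots> = mm N P H i k" by (rule mm_idm_left[OF ij(1)])
      finally show "mm N H B i k = mm N P H i k" .
    qed auto
    also have "\<dots> = mm N P (mm N H H) i j" by (rule mm_assoc)
    also have "\<dots> = mm N P idm i j" using HH ij by (intro mm_cong) auto
    also have "\<dots> = P i j" by (rule mm_idm_right[OF ij(2)])
    finally show ?thesis by simp
  qed
  then show ?case using unU N_def by blast
qed

lemma spectral_sum:
  fixes P :: cmat
  assumes "herm n P"
  shows "\<exists>U d. unitary n U \<and> (\<forall>i<n. \<forall>j<n. P i j = (\<Sum>k<n. U i k * complex_of_real (d k) * cnj (U j k)))"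
  using spectral[OF assms] udu by metis

primrec mpw :: "nat \<Rightarrow> cmat \<Rightarrow> nat \<Rightarrow> cmat" where
  "mpw n P 0 = idm"
| "mpw n P (Suc q) = mm n P (mpw n P q)"

lemma int_cyc: "0 < p \<Longrightarrow> int (cyc p k s) = (int k - int s) mod int p"
  unfolding cyc_def by simp

lemma cyc_lt: "0 < p \<Longrightarrow> cyc p k s < p"
  unfolding cyc_def by (simp add: nat_less_iff)

lemma cyc_cyc: "0 < p \<Longrightarrow> cyc p (cyc p r t) (cyc p s t) = cyc p r s"
proof -
  assume p: "0 < p"
  have "int (cyc p (cyc p r t) (cyc p s t)) = ((int r - int t) mod int p - (int s - int t) mod int p) mod int p"
    using p by (simp add: int_cyc)
  also have "\<dots> = ((int r - int t) - (int s - int t)) mod int p" by (simp add: mod_diff_eq)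
  also have "\<dots> = int (cyc p r s)" using p by (simp add: int_cyc)
  finally show ?thesis by simp
qed

lemma cyc_0: "0 < p \<Longrightarrow> cyc p 0 (cyc p r t) = cyc p t r"
proof -
  assume p: "0 < p"
  have "int (cyc p 0 (cyc p r t)) = (0 - (int r - int t) mod int p) mod int p"
    using p by (simp add: int_cyc)
  also have "\<dots> = (0 - (int r - int t)) mod int p" by (rule mod_diff_right_eq)
  also have "\<dots> = int (cyc p t r)" using p by (simp add: int_cyc)
  finally show ?thesis by simp
qed

lemma cyc_add: "0 < p \<Longrightarrow> s < p \<Longrightarrow> cyc p ((s + t) mod p) t = s"
proof -
  assume p: "0 < p" "s < p"
  have "int (cyc p ((s + t) mod p) t) = (int ((s + t) mod p) - int t) mod int p"
    using p by (simp add: int_cyc)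
  also have "\<dots> = ((int s + int t) mod int p - int t) mod int p" by (simp add: zmod_int)
  also have "\<dots> = ((int s + int t) - int t) mod int p" by (rule mod_diff_left_eq)
  also have "\<dots> = int s" using p by simp
  finally show ?thesis by simp
qed

lemma add_cyc: "0 < p \<Longrightarrow> s < p \<Longrightarrow> (cyc p s t + t) mod p = s"
proof -
  assume p: "0 < p" "s < p"
  have "int ((cyc p s t + t) mod p) = ((int s - int t) mod int p + int t) mod int p"
    using p by (simp add: int_cyc zmod_int)
  also have "\<dots> = int s mod int p" by (simp add: mod_add_left_eq)
  also have "\<dots> = int s" using p by simp
  finally show ?thesis by simp
qed

lemma cyc_eq0: "0 < p \<Longrightarrow> r < p \<Longrightarrow> t < p \<Longrightarrow> cyc p r t = 0 \<longleftrightarrow> r = t"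
proof -
  assume p: "0 < p" "r < p" "t < p"
  have "cyc p r t = 0 \<longleftrightarrow> (int r - int t) mod int p = 0" using p int_cyc[of p r t] by auto
  also have "\<dots> \<longleftrightarrow> int p dvd (int r - int t)" by (simp add: dvd_eq_mod_eq_0)
  also have "\<dots> \<longleftrightarrow> int r mod int p = int t mod int p" by (simp add: mod_eq_dvd_iff)
  also have "\<dots> \<longleftrightarrow> r = t" using p by simp
  finally show ?thesis .
qed

lemma sum_split_mp:
  fixes f :: "nat \<Rightarrow> 'a::comm_monoid_add"
  shows "(\<Sum>c<m*p. f c) = (\<Sum>s<p. \<Sum>l<m. f (s*m + l))"
proof -
  have "(\<Sum>c<m*p. f c) = (\<Sum>s<p. sum f {s * m..<s * m + m})"
    using sum.nat_group[of f m p] by (simp add: mult.commute)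
  also have "\<dots> = (\<Sum>s<p. \<Sum>l<m. f (s*m + l))"
  proof (rule sum.cong[OF refl])
    fix s
    have "sum f {s * m..<s * m + m} = sum f {0 + s*m..<m + s*m}" by (simp add: add.commute)
    also have "\<dots> = (\<Sum>l = 0..<m. f (l + s*m))" by (rule sum.shift_bounds_nat_ivl)
    finally show "sum f {s * m..<s * m + m} = (\<Sum>l<m. f (s*m + l))"
      by (simp add: atLeast0LessThan add.commute)
  qed
  finally show ?thesis .
qed

lemma bcirc_tprod:
  assumes m: "0 < m" and p: "0 < p"
  shows "bcirc m m p (tprod m p S T) a b = (\<Sum>c<m*p. bcirc m m p S a c * bcirc m m p T c b)"
proof -
  define r where "r = a div m"
  define t where "t = b div m"
  have "(\<Sum>c<m*p. bcirc m m p S a c * bcirc m m p T c b)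
      = (\<Sum>s<p. \<Sum>l<m. bcirc m m p S a (s*m+l) * bcirc m m p T (s*m+l) b)"
    by (rule sum_split_mp)
  also have "\<dots> = (\<Sum>s<p. \<Sum>l<m. S (a mod m) l (cyc p r s) * T l (b mod m) (cyc p s t))"
    unfolding bcirc_def r_def t_def using m by (intro sum.cong refl) auto
  also have "\<dots> = (\<Sum>s<p. \<Sum>l<m. S (a mod m) l (cyc p (cyc p r t) s) * T l (b mod m) s)"
  proof (rule sum.reindex_bij_witness[where j = "\<lambda>s. cyc p s t" and i = "\<lambda>s. (s + t) mod p"])
    fix s assume s: "s \<in> {..<p}"
    show "(cyc p s t + t) mod p = s" using s p by (simp add: add_cyc)
    show "cyc p s t \<in> {..<p}" using p by (simp add: cyc_lt)
    show "(\<Sum>l<m. S (a mod m) l (cyc p (cyc p r t) (cyc p s t)) * T l (b mod m) (cyc p s t))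
        = (\<Sum>l<m. S (a mod m) l (cyc p r s) * T l (b mod m) (cyc p s t))"
      using p by (simp add: cyc_cyc)
  next
    fix s assume s: "s \<in> {..<p}"
    show "cyc p ((s + t) mod p) t = s" using s p by (simp add: cyc_add)
    show "(s + t) mod p \<in> {..<p}" using p by simp
  qed
  also have "\<dots> = bcirc m m p (tprod m p S T) a b"
    unfolding bcirc_def tprod_def r_def t_def by (simp add: sum.swap[of _ "{..<p}"])
  finally show ?thesis by simp
qed

lemma bcirc_tid:
  assumes m: "0 < m" and p: "0 < p" and a: "a < m*p" and b: "b < m*p"
  shows "bcirc m m p tid a b = idm a b"
proof -
  have ad: "a div m < p" using a m by (simp add: div_less_iff_less_mult mult.commute)
  have bd: "b div m < p" using b m by (simp add: div_less_iff_less_mult mult.commute)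
  have "(a mod m = b mod m \<and> cyc p (a div m) (b div m) = 0) \<longleftrightarrow> a = b"
    using cyc_eq0[OF p ad bd] by (metis div_mult_mod_eq)
  thus ?thesis unfolding bcirc_def tid_def idm_def by auto
qed

lemma bcirc_tpow:
  assumes m: "0 < m" and p: "0 < p" and a: "a < m*p" and b: "b < m*p"
  shows "bcirc m m p (tpow m p T q) a b = mpw (m*p) (bcirc m m p T) q a b"
  using a b
proof (induction q arbitrary: a b)
  case 0
  then show ?case using bcirc_tid[OF m p] by simp
next
  case (Suc q)
  have "bcirc m m p (tpow m p T (Suc q)) a b = (\<Sum>c<m*p. bcirc m m p T a c * bcirc m m p (tpow m p T q) c b)"
    by (simp add: bcirc_tprod[OF m p])
  also have "\<dots> = (\<Sum>c<m*p. bcirc m m p T a c * mpw (m*p) (bcirc m m p T) q c b)"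
    using Suc by (intro sum.cong) auto
  finally show ?case by (simp add: mm_def)
qed

lemma bcirc_texp:
  "bcirc m m p (texp m p T) a b = (\<Sum>q. bcirc m m p (tpow m p T q) a b / of_nat (fact q))"
  unfolding bcirc_def texp_def ..

lemma herm_bcirc:
  assumes m: "0 < m" and p: "0 < p" and h: "hermitian_tensor m p T"
  shows "herm (m*p) (bcirc m m p T)"
  unfolding herm_def
proof (intro allI impI)
  fix a b assume "a < m*p" "b < m*p"
  have "cnj (T (b mod m) (a mod m) (cyc p 0 (cyc p (a div m) (b div m)))) = T (a mod m) (b mod m) (cyc p (a div m) (b div m))"
    using h m p cyc_lt[OF p] unfolding hermitian_tensor_def tconjT_def by auto
  thus "cnj (bcirc m m p T b a) = bcirc m m p T a b"
    unfolding bcirc_def using cyc_0[OF p] by simp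
qed

lemma sum_prod_swap:
  fixes f g :: "nat \<Rightarrow> nat \<Rightarrow> complex"
  shows "(\<Sum>k\<in>K. (\<Sum>a\<in>A. f a k) * (\<Sum>b\<in>B. g b k)) = (\<Sum>a\<in>A. \<Sum>b\<in>B. \<Sum>k\<in>K. f a k * g b k)"
proof -
  have "(\<Sum>k\<in>K. (\<Sum>a\<in>A. f a k) * (\<Sum>b\<in>B. g b k)) = (\<Sum>k\<in>K. \<Sum>a\<in>A. \<Sum>b\<in>B. f a k * g b k)"
    by (simp add: sum_product)
  also have "\<dots> = (\<Sum>a\<in>A. \<Sum>k\<in>K. \<Sum>b\<in>B. f a k * g b k)" by (rule sum.swap)
  also have "\<dots> = (\<Sum>a\<in>A. \<Sum>b\<in>B. \<Sum>k\<in>K. f a k * g b k)" by (rule sum.cong[OF refl], rule sum.swap)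
  finally show ?thesis .
qed

lemma swap4:
  fixes f :: "nat \<Rightarrow> nat \<Rightarrow> nat \<Rightarrow> nat \<Rightarrow> complex"
  shows "(\<Sum>a\<in>A. \<Sum>b\<in>B. \<Sum>k\<in>K. \<Sum>i\<in>I. f a b k i) = (\<Sum>i\<in>I. \<Sum>k\<in>K. \<Sum>a\<in>A. \<Sum>b\<in>B. f a b k i)"
proof -
  have "(\<Sum>a\<in>A. \<Sum>b\<in>B. \<Sum>k\<in>K. \<Sum>i\<in>I. f a b k i) = (\<Sum>a\<in>A. \<Sum>k\<in>K. \<Sum>i\<in>I. \<Sum>b\<in>B. f a b k i)"
  proof (rule sum.cong[OF refl])
    fix a
    have "(\<Sum>b\<in>B. \<Sum>k\<in>K. \<Sum>i\<in>I. f a b k i) = (\<Sum>k\<in>K. \<Sum>b\<in>B. \<Sum>i\<in>I. f a b k i)" by (rule sum.swap)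
    also have "\<dots> = (\<Sum>k\<in>K. \<Sum>i\<in>I. \<Sum>b\<in>B. f a b k i)" by (rule sum.cong[OF refl], rule sum.swap)
    finally show "(\<Sum>b\<in>B. \<Sum>k\<in>K. \<Sum>i\<in>I. f a b k i) = (\<Sum>k\<in>K. \<Sum>i\<in>I. \<Sum>b\<in>B. f a b k i)" .
  qed
  also have "\<dots> = (\<Sum>k\<in>K. \<Sum>a\<in>A. \<Sum>i\<in>I. \<Sum>b\<in>B. f a b k i)" by (rule sum.swap)
  also have "\<dots> = (\<Sum>k\<in>K. \<Sum>i\<in>I. \<Sum>a\<in>A. \<Sum>b\<in>B. f a b k i)" by (rule sum.cong[OF refl], rule sum.swap)
  also have "\<dots> = (\<Sum>i\<in>I. \<Sum>k\<in>K. \<Sum>a\<in>A. \<Sum>b\<in>B. f a b k i)" by (rule sum.swap)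
  finally show ?thesis .
qed

lemma delta_sum2:
  fixes g :: "nat \<Rightarrow> nat \<Rightarrow> complex"
  assumes "\<And>a b. a < n \<Longrightarrow> b < n \<Longrightarrow> h a b = idm a b"
  shows "(\<Sum>a<n. \<Sum>b<n. g a b * h a b) = (\<Sum>a<n. g a a)"
proof (rule sum.cong[OF refl])
  fix a assume a: "a \<in> {..<n}"
  have "(\<Sum>b<n. g a b * h a b) = (\<Sum>b<n. if a = b then g a b else 0)"
    using assms a by (intro sum.cong) (auto simp: idm_def)
  also have "\<dots> = g a a" using a by (simp add: sum.delta)
  finally show "(\<Sum>b<n. g a b * h a b) = g a a" .
qed

lemma mpw_spec:
  assumes U: "unitary n U" and P: "\<forall>i<n. \<forall>j<n. P i j = (\<Sum>k<n. U i k * complex_of_real (d k) * cnj (U j k))"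
    and ij: "i < n" "j < n"
  shows "mpw n P q i j = (\<Sum>k<n. U i k * complex_of_real (d k) ^ q * cnj (U j k))"
  using ij
proof (induction q arbitrary: i)
  case 0
  have "idm i j = mm n U (adj U) i j" using U 0 by (simp add: unitary_def)
  then show ?case by (simp add: mm_def adj_def)
next
  case (Suc q)
  have "mpw n P (Suc q) i j = (\<Sum>c<n. P i c * mpw n P q c j)" by (simp add: mm_def)
  also have "\<dots> = (\<Sum>c<n. (\<Sum>k<n. U i k * complex_of_real (d k) * cnj (U c k)) *
                  (\<Sum>l<n. U c l * complex_of_real (d l) ^ q * cnj (U j l)))"
    using Suc P by (intro sum.cong) auto
  also have "\<dots> = (\<Sum>k<n. \<Sum>l<n. \<Sum>c<n. (U i k * complex_of_real (d k) * cnj (U c k)) *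
                  (U c l * complex_of_real (d l) ^ q * cnj (U j l)))"
    by (rule sum_prod_swap)
  also have "\<dots> = (\<Sum>k<n. \<Sum>l<n. (U i k * complex_of_real (d k) * (complex_of_real (d l) ^ q * cnj (U j l))) * mm n (adj U) U k l)"
    unfolding mm_def adj_def by (intro sum.cong refl) (simp add: sum_distrib_left mult_ac)
  also have "\<dots> = (\<Sum>k<n. U i k * complex_of_real (d k) * (complex_of_real (d k) ^ q * cnj (U j k)))"
    by (rule delta_sum2) (use U in \<open>auto simp: unitary_def\<close>)
  finally show ?case by (simp add: mult_ac)
qed

lemma exp_sums_c:
  "(\<lambda>q. c * complex_of_real x ^ q / of_nat (fact q)) sums (c * complex_of_real (exp x))"
proof -
  have "(\<lambda>q. complex_of_real x ^ q /\<^sub>R fact q) sums exp (complex_of_real x)" by (rule exp_converges)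
  hence "(\<lambda>q. c * (complex_of_real x ^ q /\<^sub>R fact q)) sums (c * exp (complex_of_real x))" by (rule sums_mult)
  moreover have "\<And>q. c * (complex_of_real x ^ q /\<^sub>R fact q) = c * complex_of_real x ^ q / of_nat (fact q)"
    by (simp add: scaleR_conv_of_real divide_inverse mult_ac)
  ultimately show ?thesis by (simp add: exp_of_real)
qed

lemma texp_spec:
  assumes m: "0 < m" and p: "0 < p" and U: "unitary (m*p) U"
    and P: "\<forall>i<m*p. \<forall>j<m*p. bcirc m m p T i j = (\<Sum>k<m*p. U i k * complex_of_real (d k) * cnj (U j k))"
    and ab: "a < m*p" "b < m*p"
  shows "bcirc m m p (texp m p T) a b = (\<Sum>k<m*p. U a k * complex_of_real (exp (d k)) * cnj (U b k))"
proof -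
  have "(\<lambda>q. bcirc m m p (tpow m p T q) a b / of_nat (fact q)) sums (\<Sum>k<m*p. U a k * complex_of_real (exp (d k)) * cnj (U b k))"
  proof -
    have "(\<lambda>q. \<Sum>k<m*p. (U a k * cnj (U b k)) * complex_of_real (d k) ^ q / of_nat (fact q))
          sums (\<Sum>k<m*p. (U a k * cnj (U b k)) * complex_of_real (exp (d k)))"
      by (rule sums_sum) (rule exp_sums_c)
    moreover have "bcirc m m p (tpow m p T q) a b / of_nat (fact q) =
        (\<Sum>k<m*p. (U a k * cnj (U b k)) * complex_of_real (d k) ^ q / of_nat (fact q))" for q
      using bcirc_tpow[OF m p ab] mpw_spec[OF U P ab]
      by (simp add: sum_divide_distrib mult_ac)
    ultimately show ?thesis by (simp add: mult_ac)
  qed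
  thus ?thesis unfolding bcirc_texp by (rule sums_unique[symmetric])
qed

lemma ww:
  fixes x y :: complex and f :: "nat \<Rightarrow> complex"
  shows "x * y * ((\<Sum>a\<in>A. f a) * cnj (\<Sum>a\<in>A. f a)) = (\<Sum>a\<in>A. \<Sum>b\<in>A. x * y * (f a * cnj (f b)))"
proof -
  have "(\<Sum>a\<in>A. f a) * cnj (\<Sum>a\<in>A. f a) = (\<Sum>a\<in>A. \<Sum>b\<in>A. f a * cnj (f b))"
    by (simp add: cnj_sum sum_product)
  thus ?thesis by (simp add: sum_distrib_left)
qed

lemma G_lemma:
  fixes x y :: "nat \<Rightarrow> complex"
  shows "(\<Sum>a<n. \<Sum>b<n. (\<Sum>k<n. U a k * x k * cnj (U b k)) * (\<Sum>i<n. V b i * y i * cnj (V a i)))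
       = (\<Sum>i<n. \<Sum>k<n. x k * y i * ((\<Sum>a<n. cnj (V a i) * U a k) * cnj (\<Sum>a<n. cnj (V a i) * U a k)))"
proof -
  have "(\<Sum>a<n. \<Sum>b<n. (\<Sum>k<n. U a k * x k * cnj (U b k)) * (\<Sum>i<n. V b i * y i * cnj (V a i)))
      = (\<Sum>a<n. \<Sum>b<n. \<Sum>k<n. \<Sum>i<n. x k * y i * ((cnj (V a i) * U a k) * cnj (cnj (V b i) * U b k)))"
    by (simp add: sum_product mult_ac)
  also have "\<dots> = (\<Sum>i<n. \<Sum>k<n. \<Sum>a<n. \<Sum>b<n. x k * y i * ((cnj (V a i) * U a k) * cnj (cnj (V b i) * U b k)))"
    by (rule swap4)
  also have "\<dots> = (\<Sum>i<n. \<Sum>k<n. x k * y i * ((\<Sum>a<n. cnj (V a i) * U a k) * cnj (\<Sum>a<n. cnj (V a i) * U a k)))"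
    by (intro sum.cong refl) (rule ww[symmetric])
  finally show ?thesis .
qed

lemma exp_tangent: "exp (mu::real) * (lam - mu) \<le> exp lam - exp mu"
proof -
  have "exp mu * (1 + (lam - mu)) \<le> exp mu * exp (lam - mu)"
    by (rule mult_left_mono) (auto intro: exp_ge_add_one_self)
  also have "exp mu * exp (lam - mu) = exp lam" by (simp add: exp_diff)
  finally show ?thesis by (simp add: algebra_simps)
qed

lemma klein_mat:
  fixes lam mu :: "nat \<Rightarrow> real"
  assumes U: "unitary n U" and V: "unitary n V"
  shows "Re (\<Sum>a<n. \<Sum>b<n. (\<Sum>k<n. U a k * complex_of_real (exp (mu k)) * cnj (U b k)) *
            ((\<Sum>i<n. V b i * complex_of_real (lam i) * cnj (V a i)) - (\<Sum>i<n. U b i * complex_of_real (mu i) * cnj (U a i))))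
         \<le> (\<Sum>i<n. exp (lam i)) - (\<Sum>k<n. exp (mu k))"
proof -
  define W where "W i k = (\<Sum>a<n. cnj (V a i) * U a k)" for i k
  define q where "q i k = (cmod (W i k))^2" for i k
  have Wq: "W i k * cnj (W i k) = complex_of_real (q i k)" for i k
    unfolding q_def by (rule complex_norm_square[symmetric])
  have q0: "q i k \<ge> 0" for i k unfolding q_def by simp
  have uU1: "mm n (adj U) U i j = idm i j" "mm n U (adj U) i j = idm i j" if "i < n" "j < n" for i j
    using U that by (auto simp: unitary_def)
  have uV1: "mm n (adj V) V i j = idm i j" "mm n V (adj V) i j = idm i j" if "i < n" "j < n" for i j
    using V that by (auto simp: unitary_def)
  have T1: "(\<Sum>a<n. \<Sum>b<n. (\<Sum>k<n. U a k * complex_of_real (exp (mu k)) * cnj (U b k)) * (\<Sum>i<n. V b i * complex_of_real (lam i) * cnj (V a i)))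
     = complex_of_real (\<Sum>i<n. \<Sum>k<n. exp (mu k) * lam i * q i k)"
    using G_lemma[where n=n and U=U and x="\<lambda>k. complex_of_real (exp (mu k))" and V=V and y="\<lambda>i. complex_of_real (lam i)"]
    by (simp add: W_def[symmetric] Wq)
  have T2: "(\<Sum>a<n. \<Sum>b<n. (\<Sum>k<n. U a k * complex_of_real (exp (mu k)) * cnj (U b k)) * (\<Sum>i<n. U b i * complex_of_real (mu i) * cnj (U a i)))
     = complex_of_real (\<Sum>k<n. exp (mu k) * mu k)"
  proof -
    have "(\<Sum>a<n. \<Sum>b<n. (\<Sum>k<n. U a k * complex_of_real (exp (mu k)) * cnj (U b k)) * (\<Sum>i<n. U b i * complex_of_real (mu i) * cnj (U a i)))
      = (\<Sum>i<n. \<Sum>k<n. complex_of_real (exp (mu k)) * complex_of_real (mu i) * ((\<Sum>a<n. cnj (U a i) * U a k) * cnj (\<Sum>a<n. cnj (U a i) * U a k)))"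
      by (rule G_lemma)
    also have "\<dots> = (\<Sum>i<n. complex_of_real (exp (mu i)) * complex_of_real (mu i))"
    proof (rule delta_sum2)
      fix a b assume ab: "a < n" "b < n"
      have "(\<Sum>c<n. cnj (U c a) * U c b) = idm a b" using uU1(1)[OF ab] by (simp add: mm_def adj_def)
      thus "(\<Sum>c<n. cnj (U c a) * U c b) * cnj (\<Sum>c<n. cnj (U c a) * U c b) = idm a b" by (simp add: idm_def)
    qed
    finally show ?thesis by simp
  qed
  have row: "(\<Sum>k<n. q i k) = 1" if i: "i < n" for i
  proof -
    have "(\<Sum>k<n. W i k * cnj (W i k)) = (\<Sum>k<n. (\<Sum>a<n. cnj (V a i) * U a k) * (\<Sum>b<n. V b i * cnj (U b k)))"
      unfolding W_def by (simp add: cnj_sum)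
    also have "\<dots> = (\<Sum>a<n. \<Sum>b<n. \<Sum>k<n. (cnj (V a i) * U a k) * (V b i * cnj (U b k)))" by (rule sum_prod_swap)
    also have "\<dots> = (\<Sum>a<n. \<Sum>b<n. (cnj (V a i) * V b i) * mm n U (adj U) a b)"
      unfolding mm_def adj_def by (simp add: sum_distrib_left mult_ac)
    also have "\<dots> = (\<Sum>a<n. cnj (V a i) * V a i)" by (rule delta_sum2) (simp add: uU1)
    also have "\<dots> = mm n (adj V) V i i" by (simp add: mm_def adj_def)
    also have "\<dots> = 1" using uV1(1)[OF i i] by (simp add: idm_def)
    finally have "complex_of_real (\<Sum>k<n. q i k) = 1" by (simp add: Wq)
    thus ?thesis by (metis of_real_1 of_real_eq_iff)
  qed
  have col: "(\<Sum>i<n. q i k) = 1" if k: "k < n" for k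
  proof -
    have "(\<Sum>i<n. W i k * cnj (W i k)) = (\<Sum>i<n. (\<Sum>a<n. cnj (V a i) * U a k) * (\<Sum>b<n. V b i * cnj (U b k)))"
      unfolding W_def by (simp add: cnj_sum)
    also have "\<dots> = (\<Sum>a<n. \<Sum>b<n. \<Sum>i<n. (cnj (V a i) * U a k) * (V b i * cnj (U b k)))" by (rule sum_prod_swap)
    also have "\<dots> = (\<Sum>a<n. \<Sum>b<n. (U a k * cnj (U b k)) * mm n V (adj V) b a)"
      unfolding mm_def adj_def by (simp add: sum_distrib_left mult_ac)
    also have "\<dots> = (\<Sum>a<n. U a k * cnj (U a k))"
      by (rule delta_sum2) (simp add: uV1 idm_def)
    also have "\<dots> = mm n (adj U) U k k" by (simp add: mm_def adj_def mult_ac)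
    also have "\<dots> = 1" using uU1(1)[OF k k] by (simp add: idm_def)
    finally have "complex_of_real (\<Sum>i<n. q i k) = 1" by (simp add: Wq)
    thus ?thesis by (metis of_real_1 of_real_eq_iff)
  qed
  have S1: "(\<Sum>i<n. exp (lam i)) = (\<Sum>i<n. \<Sum>k<n. q i k * exp (lam i))"
    using row by (simp add: sum_distrib_right[symmetric])
  have S2: "(\<Sum>k<n. exp (mu k)) = (\<Sum>i<n. \<Sum>k<n. q i k * exp (mu k))"
  proof -
    have "(\<Sum>k<n. exp (mu k)) = (\<Sum>k<n. \<Sum>i<n. q i k * exp (mu k))"
      using col by (simp add: sum_distrib_right[symmetric])
    also have "\<dots> = (\<Sum>i<n. \<Sum>k<n. q i k * exp (mu k))" by (rule sum.swap)
    finally show ?thesis .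
  qed
  have S3: "(\<Sum>k<n. exp (mu k) * mu k) = (\<Sum>i<n. \<Sum>k<n. q i k * (exp (mu k) * mu k))"
  proof -
    have "(\<Sum>k<n. exp (mu k) * mu k) = (\<Sum>k<n. \<Sum>i<n. q i k * (exp (mu k) * mu k))"
      using col by (simp add: sum_distrib_right[symmetric])
    also have "\<dots> = (\<Sum>i<n. \<Sum>k<n. q i k * (exp (mu k) * mu k))" by (rule sum.swap)
    finally show ?thesis .
  qed
  have "(\<Sum>i<n. \<Sum>k<n. exp (mu k) * lam i * q i k) - (\<Sum>k<n. exp (mu k) * mu k)
      = (\<Sum>i<n. \<Sum>k<n. q i k * (exp (mu k) * (lam i - mu k)))"
    unfolding S3 by (simp add: sum_subtractf[symmetric] algebra_simps)
  also have "\<dots> \<le> (\<Sum>i<n. \<Sum>k<n. q i k * (exp (lam i) - exp (mu k)))"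
    by (intro sum_mono mult_left_mono exp_tangent q0)
  also have "\<dots> = (\<Sum>i<n. exp (lam i)) - (\<Sum>k<n. exp (mu k))"
    unfolding S1 S2 by (simp add: sum_subtractf[symmetric] algebra_simps)
  finally have ineq: "(\<Sum>i<n. \<Sum>k<n. exp (mu k) * lam i * q i k) - (\<Sum>k<n. exp (mu k) * mu k)
      \<le> (\<Sum>i<n. exp (lam i)) - (\<Sum>k<n. exp (mu k))" .
  have "(\<Sum>a<n. \<Sum>b<n. (\<Sum>k<n. U a k * complex_of_real (exp (mu k)) * cnj (U b k)) *
            ((\<Sum>i<n. V b i * complex_of_real (lam i) * cnj (V a i)) - (\<Sum>i<n. U b i * complex_of_real (mu i) * cnj (U a i))))
      = complex_of_real (\<Sum>i<n. \<Sum>k<n. exp (mu k) * lam i * q i k) - complex_of_real (\<Sum>k<n. exp (mu k) * mu k)"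
    unfolding T1[symmetric] T2[symmetric] by (simp add: right_diff_distrib sum_subtractf)
  thus ?thesis using ineq by simp
qed

lemma tr_spec:
  assumes m: "0 < m" and p: "0 < p" and U: "unitary (m*p) U"
    and P: "\<forall>i<m*p. \<forall>j<m*p. bcirc m m p T i j = (\<Sum>k<m*p. U i k * complex_of_real (d k) * cnj (U j k))"
  shows "tTr m p (texp m p T) = complex_of_real (\<Sum>k<m*p. exp (d k))"
proof -
  have "tTr m p (texp m p T) = (\<Sum>a<m*p. \<Sum>k<m*p. U a k * complex_of_real (exp (d k)) * cnj (U a k))"
    unfolding tTr_def using texp_spec[OF m p U P] by (intro sum.cong) auto
  also have "\<dots> = (\<Sum>k<m*p. complex_of_real (exp (d k)) * mm (m*p) (adj U) U k k)"
    unfolding mm_def adj_def by (subst sum.swap) (simp add: sum_distrib_left mult_ac)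
  also have "\<dots> = (\<Sum>k<m*p. complex_of_real (exp (d k)))"
    using U by (intro sum.cong) (auto simp: unitary_def idm_def)
  finally show ?thesis by simp
qed

lemma tr_real:
  assumes m: "0 < m" and p: "0 < p" and h: "hermitian_tensor m p T"
  shows "Im (tTr m p (texp m p T)) = 0" "Re (tTr m p (texp m p T)) \<ge> 0"
proof -
  obtain U d where U: "unitary (m*p) U"
    and P: "\<forall>i<m*p. \<forall>j<m*p. bcirc m m p T i j = (\<Sum>k<m*p. U i k * complex_of_real (d k) * cnj (U j k))"
    using spectral_sum[OF herm_bcirc[OF m p h]] by blast
  from tr_spec[OF m p U P] show "Im (tTr m p (texp m p T)) = 0" "Re (tTr m p (texp m p T)) \<ge> 0"
    by (simp_all add: sum_nonneg)
qed

lemma klein_t: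
  assumes m: "0 < m" and p: "0 < p" and hS: "hermitian_tensor m p S" and hT: "hermitian_tensor m p T"
  shows "Re (tTr m p (texp m p T)) + Re (\<Sum>a<m*p. \<Sum>b<m*p. bcirc m m p (texp m p T) a b *
            (bcirc m m p S b a - bcirc m m p T b a)) \<le> Re (tTr m p (texp m p S))"
proof -
  obtain V lam where V: "unitary (m*p) V"
    and PS: "\<forall>i<m*p. \<forall>j<m*p. bcirc m m p S i j = (\<Sum>k<m*p. V i k * complex_of_real (lam k) * cnj (V j k))"
    using spectral_sum[OF herm_bcirc[OF m p hS]] by blast
  obtain U mu where U: "unitary (m*p) U"
    and PT: "\<forall>i<m*p. \<forall>j<m*p. bcirc m m p T i j = (\<Sum>k<m*p. U i k * complex_of_real (mu k) * cnj (U j k))"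
    using spectral_sum[OF herm_bcirc[OF m p hT]] by blast
  have "(\<Sum>a<m*p. \<Sum>b<m*p. bcirc m m p (texp m p T) a b * (bcirc m m p S b a - bcirc m m p T b a))
     = (\<Sum>a<m*p. \<Sum>b<m*p. (\<Sum>k<m*p. U a k * complex_of_real (exp (mu k)) * cnj (U b k)) *
            ((\<Sum>i<m*p. V b i * complex_of_real (lam i) * cnj (V a i)) - (\<Sum>i<m*p. U b i * complex_of_real (mu i) * cnj (U a i))))"
    using texp_spec[OF m p U PT] PS PT by (intro sum.cong refl) auto
  hence "Re (\<Sum>a<m*p. \<Sum>b<m*p. bcirc m m p (texp m p T) a b * (bcirc m m p S b a - bcirc m m p T b a))
      \<le> (\<Sum>i<m*p. exp (lam i)) - (\<Sum>k<m*p. exp (mu k))"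
    using klein_mat[OF U V, of mu lam] by simp
  thus ?thesis using tr_spec[OF m p U PT] tr_spec[OF m p V PS] by simp
qed

lemma tpow_local:
  assumes p: "0 < p" and eq: "\<forall>i<m. \<forall>j<m. \<forall>k<p. S i j k = T i j k"
  shows "i < m \<Longrightarrow> j < m \<Longrightarrow> k < p \<Longrightarrow> tpow m p S q i j k = tpow m p T q i j k"
proof (induction q arbitrary: i j k)
  case 0
  then show ?case by simp
next
  case (Suc q)
  have "tprod m p S (tpow m p S q) i j k = tprod m p T (tpow m p T q) i j k"
    unfolding tprod_def
  proof (rule sum.cong[OF refl], rule sum.cong[OF refl])
    fix s l assume s: "s \<in> {..<p}" and l: "l \<in> {..<m}"
    have "S i l (cyc p k s) = T i l (cyc p k s)" using eq Suc.prems(1) l cyc_lt[OF p] by auto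
    moreover have "tpow m p S q l j s = tpow m p T q l j s" using Suc.IH l Suc.prems(2) s by auto
    ultimately show "S i l (cyc p k s) * tpow m p S q l j s = T i l (cyc p k s) * tpow m p T q l j s" by simp
  qed
  then show ?case by simp
qed

lemma tTr_local:
  assumes m: "0 < m" and p: "0 < p" and eq: "\<forall>i<m. \<forall>j<m. \<forall>k<p. S i j k = T i j k"
  shows "tTr m p (texp m p S) = tTr m p (texp m p T)"
  unfolding tTr_def bcirc_def
proof (rule sum.cong[OF refl])
  fix a assume "a \<in> {..<m*p}"
  have 1: "a mod m < m" using m by simp
  have 2: "cyc p (a div m) (a div m) < p" using cyc_lt[OF p] by simp
  show "texp m p S (a mod m) (a mod m) (cyc p (a div m) (a div m)) = texp m p T (a mod m) (a mod m) (cyc p (a div m) (a div m))"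
    unfolding texp_def using tpow_local[OF p eq 1 1 2] by simp
qed

lemma tpow_bound:
  assumes p: "0 < p" and K: "\<forall>i<m. \<forall>j<m. \<forall>k<p. cmod (T i j k) \<le> K" and K0: "0 \<le> K"
  shows "i < m \<Longrightarrow> j < m \<Longrightarrow> k < p \<Longrightarrow> cmod (tpow m p T q i j k) \<le> (real (m*p) * K)^q"
proof (induction q arbitrary: i j k)
  case 0
  then show ?case by (simp add: tid_def)
next
  case (Suc q)
  have "cmod (tpow m p T (Suc q) i j k) = cmod (\<Sum>s<p. \<Sum>l<m. T i l (cyc p k s) * tpow m p T q l j s)"
    by (simp add: tprod_def)
  also have "\<dots> \<le> (\<Sum>s<p. cmod (\<Sum>l<m. T i l (cyc p k s) * tpow m p T q l j s))" by (rule norm_sum)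
  also have "\<dots> \<le> (\<Sum>s<p. \<Sum>l<m. cmod (T i l (cyc p k s)) * cmod (tpow m p T q l j s))"
    by (rule sum_mono, rule order_trans[OF norm_sum]) (simp add: norm_mult)
  also have "\<dots> \<le> (\<Sum>s<p. \<Sum>l<m. K * (real (m*p) * K)^q)"
  proof (rule sum_mono, rule sum_mono)
    fix s l assume s: "s \<in> {..<p}" and l: "l \<in> {..<m}"
    have "cmod (T i l (cyc p k s)) \<le> K" using K Suc.prems(1) l cyc_lt[OF p] by auto
    moreover have "cmod (tpow m p T q l j s) \<le> (real (m*p) * K)^q" using Suc.IH l Suc.prems(2) s by auto
    ultimately show "cmod (T i l (cyc p k s)) * cmod (tpow m p T q l j s) \<le> K * (real (m*p) * K)^q"
      using K0 by (intro mult_mono) auto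
  qed
  also have "\<dots> = real p * (real m * (K * (real (m*p) * K)^q))" by simp
  also have "\<dots> = (real (m*p) * K)^(Suc q)" by (simp only: power_Suc of_nat_mult mult_ac)
  finally show ?case .
qed

lemma texp_summable:
  assumes p: "0 < p" and i: "i < m" "j < m" "k < p"
  shows "summable (\<lambda>q. tpow m p T q i j k / of_nat (fact q))"
proof -
  define K where "K = (\<Sum>i<m. \<Sum>j<m. \<Sum>k<p. cmod (T i j k))"
  have K0: "0 \<le> K" unfolding K_def by (intro sum_nonneg) auto
  have KK: "\<forall>i<m. \<forall>j<m. \<forall>k<p. cmod (T i j k) \<le> K"
  proof (intro allI impI)
    fix i j k assume ijk: "i < m" "j < m" "k < p"
    have "cmod (T i j k) \<le> (\<Sum>k<p. cmod (T i j k))" using ijk by (intro member_le_sum) auto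
    also have "\<dots> \<le> (\<Sum>j<m. \<Sum>k<p. cmod (T i j k))" using ijk
      by (intro member_le_sum[of j "{..<m}" "\<lambda>j. \<Sum>k<p. cmod (T i j k)"]) (auto intro!: sum_nonneg)
    also have "\<dots> \<le> K" unfolding K_def using ijk
      by (intro member_le_sum[of i "{..<m}" "\<lambda>i. \<Sum>j<m. \<Sum>k<p. cmod (T i j k)"]) (auto intro!: sum_nonneg)
    finally show "cmod (T i j k) \<le> K" .
  qed
  have "summable (\<lambda>q. (real (m*p) * K)^q /\<^sub>R fact q)" using exp_converges sums_summable by blast
  moreover have "norm (tpow m p T q i j k / of_nat (fact q)) \<le> (real (m*p) * K)^q /\<^sub>R fact q" for q
  proof -
    have "norm (tpow m p T q i j k / of_nat (fact q)) = cmod (tpow m p T q i j k) / fact q"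
      by (simp add: norm_divide)
    also have "\<dots> \<le> (real (m*p) * K)^q / fact q"
      by (rule divide_right_mono[OF tpow_bound[OF p KK K0 i]]) simp
    finally show ?thesis by (simp add: divide_inverse mult.commute)
  qed
  ultimately show ?thesis by (rule summable_comparison_test'[where N=0])
qed

lemma tpow_meas:
  assumes p: "0 < p" and T: "\<And>i j k. i < m \<Longrightarrow> j < m \<Longrightarrow> k < p \<Longrightarrow> (\<lambda>\<omega>. T \<omega> i j k) \<in> borel_measurable N"
  shows "i < m \<Longrightarrow> j < m \<Longrightarrow> k < p \<Longrightarrow> (\<lambda>\<omega>. tpow m p (T \<omega>) q i j k) \<in> borel_measurable N"
proof (induction q arbitrary: i j k)
  case 0
  then show ?case by simp
next
  case (Suc q)
  have "(\<lambda>\<omega>. \<Sum>s<p. \<Sum>l<m. T \<omega> i l (cyc p k s) * tpow m p (T \<omega>) q l j s) \<in> borel_measurable N"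
  proof (rule borel_measurable_sum, rule borel_measurable_sum, rule borel_measurable_times)
    fix s l assume s: "s \<in> {..<p}" and l: "l \<in> {..<m}"
    show "(\<lambda>\<omega>. T \<omega> i l (cyc p k s)) \<in> borel_measurable N" using T Suc.prems(1) l cyc_lt[OF p] by auto
    show "(\<lambda>\<omega>. tpow m p (T \<omega>) q l j s) \<in> borel_measurable N" using Suc.IH l Suc.prems(2) s by auto
  qed
  then show ?case by (simp add: tprod_def)
qed

lemma tTr_meas:
  assumes m: "0 < m" and p: "0 < p"
    and T: "\<And>i j k. i < m \<Longrightarrow> j < m \<Longrightarrow> k < p \<Longrightarrow> (\<lambda>\<omega>. T \<omega> i j k) \<in> borel_measurable N"
  shows "(\<lambda>\<omega>. tTr m p (texp m p (T \<omega>))) \<in> borel_measurable N"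
  unfolding tTr_def bcirc_def
proof (rule borel_measurable_sum)
  fix a assume "a \<in> {..<m*p}"
  have i: "a mod m < m" using m by simp
  have k: "cyc p (a div m) (a div m) < p" using cyc_lt[OF p] by simp
  define i0 where "i0 = a mod m"
  define k0 where "k0 = cyc p (a div m) (a div m)"
  have "(\<lambda>\<omega>. texp m p (T \<omega>) i0 i0 k0) \<in> borel_measurable N"
    unfolding texp_def
  proof (rule borel_measurable_LIMSEQ_metric)
    fix n
    show "(\<lambda>\<omega>. \<Sum>q<n. tpow m p (T \<omega>) q i0 i0 k0 / of_nat (fact q)) \<in> borel_measurable N"
      using tpow_meas[OF p T] i k unfolding i0_def k0_def
      by (intro borel_measurable_sum borel_measurable_divide) auto
  next
    fix \<omega>
    show "(\<lambda>n. \<Sum>q<n. tpow m p (T \<omega>) q i0 i0 k0 / of_nat (fact q)) \<longlonglongrightarrow> (\<Sum>q. tpow m p (T \<omega>) q i0 i0 k0 / of_nat (fact q))"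
      using texp_summable[OF p] i k unfolding i0_def k0_def by (intro summable_LIMSEQ) auto
  qed
  then show "(\<lambda>\<omega>. texp m p (T \<omega>) (a mod m) (a mod m) (cyc p (a div m) (a div m))) \<in> borel_measurable N"
    unfolding i0_def k0_def .
qed

definition Tg :: "tensor \<Rightarrow> ('w \<Rightarrow> tensor) \<Rightarrow> real \<Rightarrow> real \<Rightarrow> 'w \<Rightarrow> 'w \<Rightarrow> tensor" where
  "Tg A X c1 c2 \<omega> \<omega>' = (\<lambda>i j k. A i j k + complex_of_real c1 * X \<omega> i j k + complex_of_real c2 * X \<omega>' i j k)"

lemma herm_Tg:
  assumes "hermitian_tensor m p A" "hermitian_tensor m p (X \<omega>)" "hermitian_tensor m p (X \<omega>')"
  shows "hermitian_tensor m p (Tg A X c1 c2 \<omega> \<omega>')"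
  using assms unfolding hermitian_tensor_def tconjT_def Tg_def by auto

lemma meas_Tg:
  assumes m: "0 < m" and p: "0 < p"
    and Xm: "\<And>i j k. i < m \<Longrightarrow> j < m \<Longrightarrow> k < p \<Longrightarrow> (\<lambda>\<omega>. X \<omega> i j k) \<in> borel_measurable M"
  shows "(\<lambda>\<omega>. tTr m p (texp m p (Tg A X c1 c2 \<omega> \<omega>))) \<in> borel_measurable M"
    and "(\<lambda>\<omega>'. tTr m p (texp m p (Tg A X c1 c2 \<omega> \<omega>'))) \<in> borel_measurable M"
proof -
  show "(\<lambda>\<omega>. tTr m p (texp m p (Tg A X c1 c2 \<omega> \<omega>))) \<in> borel_measurable M"
    by (rule tTr_meas[OF m p]) (unfold Tg_def, intro borel_measurable_add borel_measurable_times borel_measurable_const Xm; simp)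
  show "(\<lambda>\<omega>'. tTr m p (texp m p (Tg A X c1 c2 \<omega> \<omega>'))) \<in> borel_measurable M"
    by (rule tTr_meas[OF m p]) (unfold Tg_def, intro borel_measurable_add borel_measurable_times borel_measurable_const Xm; simp)
qed

lemma jensen_step:
  assumes P: "prob_space M" and m: "0 < m" and p: "0 < p" and hA: "hermitian_tensor m p A"
    and hX: "\<forall>\<omega>\<in>space M. hermitian_tensor m p (X \<omega>)"
    and Xint: "\<forall>i<m. \<forall>j<m. \<forall>k<p. integrable M (\<lambda>\<omega>. X \<omega> i j k) \<and> (\<integral>\<omega>. X \<omega> i j k \<partial>M) = 0"
    and \<omega>: "\<omega> \<in> space M"
  shows "ennreal (Re (tTr m p (texp m p (Tg A X 1 0 \<omega> \<omega>))))
           \<le> (\<integral>\<^sup>+\<omega>'. ennreal (Re (tTr m p (texp m p (Tg A X 1 (-1) \<omega> \<omega>')))) \<partial>M)"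
proof -
  interpret prob_space M by (rule P)
  have Xm: "(\<lambda>\<omega>. X \<omega> i j k) \<in> borel_measurable M" if "i < m" "j < m" "k < p" for i j k
    using Xint that by (auto intro: borel_measurable_integrable)
  define T0 where "T0 = Tg A X 1 0 \<omega> \<omega>"
  define E where "E a b = bcirc m m p (texp m p T0) a b" for a b
  define Xe where "Xe \<omega>' a b = X \<omega>' (b mod m) (a mod m) (cyc p (b div m) (a div m))" for \<omega>' a b
  define C where "C \<omega>' = (\<Sum>a<m*p. \<Sum>b<m*p. E a b * (- Xe \<omega>' a b))" for \<omega>'
  define L where "L \<omega>' = Re (tTr m p (texp m p T0)) + Re (C \<omega>')" for \<omega>'
  define G where "G \<omega>' = Re (tTr m p (texp m p (Tg A X 1 (-1) \<omega> \<omega>')))" for \<omega>'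
  have hT0: "hermitian_tensor m p T0" unfolding T0_def using hA hX \<omega> by (intro herm_Tg) auto
  have LG: "L \<omega>' \<le> G \<omega>'" if \<omega>': "\<omega>' \<in> space M" for \<omega>'
  proof -
    have hS: "hermitian_tensor m p (Tg A X 1 (-1) \<omega> \<omega>')" using hA hX \<omega> \<omega>' by (intro herm_Tg) auto
    have "bcirc m m p (Tg A X 1 (-1) \<omega> \<omega>') b a - bcirc m m p T0 b a = - Xe \<omega>' a b" for a b
      unfolding bcirc_def Tg_def T0_def Xe_def by simp
    then show ?thesis using klein_t[OF m p hS hT0] unfolding L_def G_def C_def E_def by simp
  qed
  have Xe_int: "integrable M (\<lambda>\<omega>'. Xe \<omega>' a b) \<and> (\<integral>\<omega>'. Xe \<omega>' a b \<partial>M) = 0" for a b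
  proof -
    have "b mod m < m" "a mod m < m" "cyc p (b div m) (a div m) < p" using m cyc_lt[OF p] by auto
    thus ?thesis unfolding Xe_def using Xint by blast
  qed
  have intC: "integrable M C" unfolding C_def
    using Xe_int by (intro Bochner_Integration.integrable_sum Bochner_Integration.integrable_mult_right Bochner_Integration.integrable_minus) auto
  have intCval: "(\<integral>\<omega>'. C \<omega>' \<partial>M) = 0"
  proof -
    have "(\<integral>\<omega>'. C \<omega>' \<partial>M) = (\<Sum>a<m*p. \<integral>\<omega>'. (\<Sum>b<m*p. E a b * - Xe \<omega>' a b) \<partial>M)"
      unfolding C_def using Xe_int
      by (intro Bochner_Integration.integral_sum Bochner_Integration.integrable_sum
          Bochner_Integration.integrable_mult_right Bochner_Integration.integrable_minus) auto
    also have "\<dots> = (\<Sum>a<m*p. \<Sum>b<m*p. \<integral>\<omega>'. E a b * - Xe \<omega>' a b \<partial>M)"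
      using Xe_int
      by (intro sum.cong refl Bochner_Integration.integral_sum
          Bochner_Integration.integrable_mult_right Bochner_Integration.integrable_minus) auto
    also have "\<dots> = 0" using Xe_int by simp
    finally show ?thesis .
  qed
  have intL: "integrable M L" unfolding L_def
    by (intro Bochner_Integration.integrable_add integrable_Re intC) simp
  have intLval: "(\<integral>\<omega>'. L \<omega>' \<partial>M) = Re (tTr m p (texp m p T0))"
    unfolding L_def using intC intCval
    by (subst Bochner_Integration.integral_add) (auto simp: integral_Re[symmetric] prob_space intro: integrable_Re)
  have "(\<lambda>\<omega>'. tTr m p (texp m p (Tg A X 1 (-1) \<omega> \<omega>'))) \<in> borel_measurable M"
    by (rule meas_Tg(2)[OF m p Xm])
  hence Gm: "G \<in> borel_measurable M" unfolding G_def by measurable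
  have G0: "0 \<le> G \<omega>'" if "\<omega>' \<in> space M" for \<omega>'
    unfolding G_def using hA hX \<omega> that by (intro tr_real(2)[OF m p] herm_Tg) auto
  show ?thesis
  proof (cases "(\<integral>\<^sup>+\<omega>'. ennreal (G \<omega>') \<partial>M) = \<infinity>")
    case True
    then show ?thesis unfolding G_def by simp
  next
    case False
    have intG: "integrable M G"
      using False G0 Gm by (intro integrableI_nonneg) (auto simp: top.not_eq_extremum)
    have "ennreal (Re (tTr m p (texp m p T0))) = ennreal (\<integral>\<omega>'. L \<omega>' \<partial>M)" using intLval by simp
    also have "\<dots> \<le> ennreal (\<integral>\<omega>'. G \<omega>' \<partial>M)"
      using integral_mono[OF intL intG LG] by (rule ennreal_leI)
    also have "\<dots> = (\<integral>\<^sup>+\<omega>'. ennreal (G \<omega>') \<partial>M)"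
      using intG G0 by (intro nn_integral_eq_integral[symmetric]) auto
    finally show ?thesis unfolding T0_def G_def .
  qed
qed

lemma mid_step:
  assumes m: "0 < m" and p: "0 < p" and hA: "hermitian_tensor m p A"
    and h1: "hermitian_tensor m p (X \<omega>)" and h2: "hermitian_tensor m p (X \<omega>')"
  shows "Re (tTr m p (texp m p (Tg A X 1 (-1) \<omega> \<omega>')))
      \<le> Re (tTr m p (texp m p (Tg A X 2 0 \<omega> \<omega>))) / 2 + Re (tTr m p (texp m p (Tg A X (-2) 0 \<omega>' \<omega>'))) / 2"
proof -
  define T where "T = Tg A X 1 (-1) \<omega> \<omega>'"
  define S1 where "S1 = Tg A X 2 0 \<omega> \<omega>"
  define S2 where "S2 = Tg A X (-2) 0 \<omega>' \<omega>'"
  have hT: "hermitian_tensor m p T" unfolding T_def using hA h1 h2 by (rule herm_Tg)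
  have hS1: "hermitian_tensor m p S1" unfolding S1_def using hA h1 h1 by (rule herm_Tg)
  have hS2: "hermitian_tensor m p S2" unfolding S2_def using hA h2 h2 by (rule herm_Tg)
  define E where "E a b = bcirc m m p (texp m p T) a b" for a b
  define D1 where "D1 a b = bcirc m m p S1 b a - bcirc m m p T b a" for a b
  define D2 where "D2 a b = bcirc m m p S2 b a - bcirc m m p T b a" for a b
  have D: "D1 a b + D2 a b = 0" for a b
    unfolding D1_def D2_def bcirc_def T_def S1_def S2_def Tg_def by (simp add: algebra_simps)
  have "(\<Sum>a<m*p. \<Sum>b<m*p. E a b * D1 a b) + (\<Sum>a<m*p. \<Sum>b<m*p. E a b * D2 a b)
      = (\<Sum>a<m*p. \<Sum>b<m*p. E a b * (D1 a b + D2 a b))"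
    by (simp add: sum.distrib distrib_left)
  also have "\<dots> = 0" by (simp add: D)
  finally have z: "Re (\<Sum>a<m*p. \<Sum>b<m*p. E a b * D1 a b) + Re (\<Sum>a<m*p. \<Sum>b<m*p. E a b * D2 a b) = 0"
    by (metis plus_complex.sel(1) zero_complex.sel(1))
  have k1: "Re (tTr m p (texp m p T)) + Re (\<Sum>a<m*p. \<Sum>b<m*p. E a b * D1 a b) \<le> Re (tTr m p (texp m p S1))"
    unfolding E_def D1_def by (rule klein_t[OF m p hS1 hT])
  have k2: "Re (tTr m p (texp m p T)) + Re (\<Sum>a<m*p. \<Sum>b<m*p. E a b * D2 a b) \<le> Re (tTr m p (texp m p S2))"
    unfolding E_def D2_def by (rule klein_t[OF m p hS2 hT])
  show ?thesis using k1 k2 z unfolding T_def S1_def S2_def by linarith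
qed

lemma indep_step:
  fixes \<beta> :: "'w \<Rightarrow> real"
  assumes P: "prob_space M" and m: "0 < m" and p: "0 < p" and hA: "hermitian_tensor m p A"
    and hX: "\<forall>\<omega>\<in>space M. hermitian_tensor m p (X \<omega>)"
    and Xm: "\<And>i j k. i < m \<Longrightarrow> j < m \<Longrightarrow> k < p \<Longrightarrow> (\<lambda>\<omega>. X \<omega> i j k) \<in> borel_measurable M"
    and bm: "\<beta> \<in> borel_measurable M"
    and ind: "prob_space.indep_set M
           {\<beta> -` S \<inter> space M | S. S \<in> sets borel}
           {(\<lambda>\<omega>. restrict (\<lambda>(i,j,k). X \<omega> i j k) ({..<m} \<times> {..<m} \<times> {..<p})) -` S \<inter> space M
              | S. S \<in> sets (PiM ({..<m} \<times> {..<m} \<times> {..<p}) (\<lambda>_. borel))}"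
  shows "(\<integral>\<^sup>+\<omega>. ennreal (indicator {v} (\<beta> \<omega>) * Re (tTr m p (texp m p (Tg A X c 0 \<omega> \<omega>)))) \<partial>M)
       = emeasure M {\<omega>\<in>space M. \<beta> \<omega> = v} * (\<integral>\<^sup>+\<omega>. ennreal (Re (tTr m p (texp m p (Tg A X c 0 \<omega> \<omega>)))) \<partial>M)"
proof -
  interpret prob_space M by (rule P)
  define I0 where "I0 = {..<m} \<times> {..<m} \<times> {..<p}"
  define Xr where "Xr = (\<lambda>\<omega>. restrict (\<lambda>(i,j,k). X \<omega> i j k) I0)"
  define fP where "fP x = max 0 (Re (tTr m p (texp m p (\<lambda>i j k. A i j k + complex_of_real c * x (i,j,k)))))" for x :: "nat \<times> nat \<times> nat \<Rightarrow> complex"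
  define Y1 where "Y1 x = ennreal (indicator {v} x)" for x :: real
  have ind': "indep_set {\<beta> -` S \<inter> space M | S. S \<in> sets borel} {Xr -` S \<inter> space M | S. S \<in> sets (PiM I0 (\<lambda>_. borel))}"
    using ind unfolding Xr_def I0_def .
  have Xrm: "Xr \<in> M \<rightarrow>\<^sub>M PiM I0 (\<lambda>_. borel)"
    unfolding Xr_def
  proof (rule measurable_restrict)
    fix x assume "x \<in> I0"
    then obtain i j k where x: "x = (i,j,k)" "i < m" "j < m" "k < p" unfolding I0_def by auto
    show "(\<lambda>\<omega>. case x of (i, j, k) \<Rightarrow> X \<omega> i j k) \<in> M \<rightarrow>\<^sub>M borel" using Xm x by simp
  qed
  have fPm: "fP \<in> borel_measurable (PiM I0 (\<lambda>_. borel))"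
  proof -
    have "(\<lambda>x. tTr m p (texp m p (\<lambda>i j k. A i j k + complex_of_real c * x (i,j,k)))) \<in> borel_measurable (PiM I0 (\<lambda>_. borel))"
    proof (rule tTr_meas[OF m p])
      fix i j k assume "i < m" "j < m" "k < p"
      hence "(i,j,k) \<in> I0" unfolding I0_def by auto
      hence "(\<lambda>x. x (i,j,k)) \<in> borel_measurable (PiM I0 (\<lambda>_. borel))"
        using measurable_component_singleton[of "(i,j,k)" I0 "\<lambda>_. borel"] by simp
      thus "(\<lambda>x. A i j k + complex_of_real c * x (i,j,k)) \<in> borel_measurable (PiM I0 (\<lambda>_. borel))"
        by (intro borel_measurable_add borel_measurable_times borel_measurable_const)
    qed
    thus ?thesis unfolding fP_def by measurable
  qed
  have fPX: "fP (Xr \<omega>) = Re (tTr m p (texp m p (Tg A X c 0 \<omega> \<omega>)))" if \<omega>: "\<omega> \<in> space M" for \<omega>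
  proof -
    have "tTr m p (texp m p (\<lambda>i j k. A i j k + complex_of_real c * Xr \<omega> (i,j,k))) = tTr m p (texp m p (Tg A X c 0 \<omega> \<omega>))"
      by (rule tTr_local[OF m p]) (auto simp: Xr_def I0_def Tg_def)
    moreover have "0 \<le> Re (tTr m p (texp m p (Tg A X c 0 \<omega> \<omega>)))"
      using hA hX \<omega> by (intro tr_real(2)[OF m p] herm_Tg) auto
    ultimately show ?thesis unfolding fP_def by simp
  qed
  have Int_stable: "Int_stable {Z -` A \<inter> space M |A. A \<in> sets S}" for Z :: "'w \<Rightarrow> 'z" and S
  proof (safe intro!: Int_stableI)
    fix A B assume "A \<in> sets S" "B \<in> sets S"
    then show "\<exists>C. (Z -` A \<inter> space M) \<inter> (Z -` B \<inter> space M) = (Z -` C \<inter> space M) \<and> C \<in> sets S"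
      by (intro exI[of _ "A \<inter> B"]) auto
  qed
  have Y1m: "Y1 \<in> borel_measurable borel" unfolding Y1_def by measurable
  define fPe where "fPe x = ennreal (fP x)" for x
  have fPem: "fPe \<in> borel_measurable (PiM I0 (\<lambda>_. borel))" unfolding fPe_def using fPm by measurable
  have sub1: "{(Y1 \<circ> \<beta>) -` A \<inter> space M | A. A \<in> sets borel} \<subseteq> {\<beta> -` S \<inter> space M | S. S \<in> sets borel}"
  proof safe
    fix A :: "ennreal set" assume A: "A \<in> sets borel"
    have "Y1 -` A \<in> sets borel" using measurable_sets[OF Y1m A] by simp
    moreover have "(Y1 \<circ> \<beta>) -` A \<inter> space M = \<beta> -` (Y1 -` A) \<inter> space M" by auto
    ultimately show "\<exists>S. (Y1 \<circ> \<beta>) -` A \<inter> space M = \<beta> -` S \<inter> space M \<and> S \<in> sets borel" by blast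
  qed
  have sub2: "{(fPe \<circ> Xr) -` A \<inter> space M | A. A \<in> sets borel} \<subseteq> {Xr -` S \<inter> space M | S. S \<in> sets (PiM I0 (\<lambda>_. borel))}"
  proof safe
    fix A :: "ennreal set" assume A: "A \<in> sets borel"
    have "fPe -` A \<inter> space (PiM I0 (\<lambda>_. borel)) \<in> sets (PiM I0 (\<lambda>_. borel))" using measurable_sets[OF fPem A] .
    moreover have "(fPe \<circ> Xr) -` A \<inter> space M = Xr -` (fPe -` A \<inter> space (PiM I0 (\<lambda>_. borel))) \<inter> space M"
      using measurable_space[OF Xrm] by auto
    ultimately show "\<exists>S. (fPe \<circ> Xr) -` A \<inter> space M = Xr -` S \<inter> space M \<and> S \<in> sets (PiM I0 (\<lambda>_. borel))" by blast
  qed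
  have ind2: "indep_set {(Y1 \<circ> \<beta>) -` A \<inter> space M | A. A \<in> sets borel} {(fPe \<circ> Xr) -` A \<inter> space M | A. A \<in> sets borel}"
    using ind' unfolding indep_set_def by (rule indep_sets_mono_sets) (use sub1 sub2 in \<open>auto split: bool.split\<close>)
  have iv2: "indep_var borel (Y1 \<circ> \<beta>) borel (fPe \<circ> Xr)"
    unfolding indep_var_eq
    using bm Xrm fPem Y1m indep_set_sigma_sets[OF ind2 Int_stable Int_stable] by auto
  have cb: "case_bool borel borel = (\<lambda>_. borel)" by (rule ext) (simp split: bool.split)
  have ivs: "indep_vars (\<lambda>_. borel) (case_bool (Y1 \<circ> \<beta>) (fPe \<circ> Xr)) UNIV"
    using iv2 unfolding indep_var_def cb .
  have nn: "(\<integral>\<^sup>+\<omega>. (\<Prod>b\<in>UNIV. case_bool (Y1 \<circ> \<beta>) (fPe \<circ> Xr) b \<omega>) \<partial>M)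
      = (\<Prod>b\<in>UNIV. \<integral>\<^sup>+\<omega>. (case_bool (Y1 \<circ> \<beta>) (fPe \<circ> Xr) b \<omega>) \<partial>M)"
    by (rule indep_vars_nn_integral) (use ivs in \<open>auto split: bool.split\<close>)
  have "(\<integral>\<^sup>+\<omega>. ennreal (indicator {v} (\<beta> \<omega>) * Re (tTr m p (texp m p (Tg A X c 0 \<omega> \<omega>)))) \<partial>M)
      = (\<integral>\<^sup>+\<omega>. (\<Prod>b\<in>UNIV. case_bool (Y1 \<circ> \<beta>) (fPe \<circ> Xr) b \<omega>) \<partial>M)"
  proof (intro nn_integral_cong)
    fix \<omega> assume \<omega>: "\<omega> \<in> space M"
    have "0 \<le> Re (tTr m p (texp m p (Tg A X c 0 \<omega> \<omega>)))"
      using hA hX \<omega> by (intro tr_real(2)[OF m p] herm_Tg) auto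
    then show "ennreal (indicator {v} (\<beta> \<omega>) * Re (tTr m p (texp m p (Tg A X c 0 \<omega> \<omega>))))
        = (\<Prod>b\<in>UNIV. case_bool (Y1 \<circ> \<beta>) (fPe \<circ> Xr) b \<omega>)"
      using \<omega> by (simp add: UNIV_bool fPX Y1_def fPe_def ennreal_mult mult.commute)
  qed
  also have "\<dots> = (\<integral>\<^sup>+\<omega>. Y1 (\<beta> \<omega>) \<partial>M) * (\<integral>\<^sup>+\<omega>. fPe (Xr \<omega>) \<partial>M)"
    unfolding nn by (simp add: UNIV_bool mult.commute comp_def)
  also have "(\<integral>\<^sup>+\<omega>. fPe (Xr \<omega>) \<partial>M) = (\<integral>\<^sup>+\<omega>. ennreal (Re (tTr m p (texp m p (Tg A X c 0 \<omega> \<omega>)))) \<partial>M)"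
    by (intro nn_integral_cong) (simp add: fPX fPe_def)
  also have "(\<integral>\<^sup>+\<omega>. Y1 (\<beta> \<omega>) \<partial>M) = (\<integral>\<^sup>+\<omega>. indicator {\<omega>\<in>space M. \<beta> \<omega> = v} \<omega> \<partial>M)"
    by (intro nn_integral_cong) (simp add: Y1_def indicator_def)
  also have "\<dots> = emeasure M {\<omega>\<in>space M. \<beta> \<omega> = v}"
    by (rule nn_integral_indicator) (use bm in measurable)
  finally show ?thesis .
qed

theorem lemma7:
  fixes M :: "'w measure" and m p :: nat and A :: tensor
    and X :: "'w \<Rightarrow> tensor" and \<beta> :: "'w \<Rightarrow> real"
  assumes "prob_space M"
    and "0 < m" and "0 < p"
    and "hermitian_tensor m p A"
    and "\<forall>\<omega>\<in>space M. hermitian_tensor m p (X \<omega>)"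
    and "\<forall>i<m. \<forall>j<m. \<forall>k<p. integrable M (\<lambda>\<omega>. X \<omega> i j k)
            \<and> (\<integral>\<omega>. X \<omega> i j k \<partial>M) = 0"
    and "\<beta> \<in> borel_measurable M"
    and "prob_space.prob M {\<omega>\<in>space M. \<beta> \<omega> = 1} = 1/2"
    and "prob_space.prob M {\<omega>\<in>space M. \<beta> \<omega> = -1} = 1/2"
    and "prob_space.indep_set M
           {\<beta> -` S \<inter> space M | S. S \<in> sets borel}
           {(\<lambda>\<omega>. restrict (\<lambda>(i,j,k). X \<omega> i j k) ({..<m} \<times> {..<m} \<times> {..<p})) -` S \<inter> space M
              | S. S \<in> sets (PiM ({..<m} \<times> {..<m} \<times> {..<p}) (\<lambda>_. borel))}"
    and "integrable M (\<lambda>\<omega>. tTr m p (texp m p (\<lambda>i j k. A i j k + X \<omega> i j k)))"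
    and "integrable M (\<lambda>\<omega>. tTr m p (texp m p
            (\<lambda>i j k. A i j k + complex_of_real (2 * \<beta> \<omega>) * X \<omega> i j k)))"
  shows "(\<integral>\<omega>. tTr m p (texp m p (\<lambda>i j k. A i j k + X \<omega> i j k)) \<partial>M)
       \<le> (\<integral>\<omega>. tTr m p (texp m p
            (\<lambda>i j k. A i j k + complex_of_real (2 * \<beta> \<omega>) * X \<omega> i j k)) \<partial>M)"
proof -
  interpret P: prob_space M by (rule assms(1))
  have m: "0 < m" and p: "0 < p" and hA: "hermitian_tensor m p A"
    and hX: "\<forall>\<omega>\<in>space M. hermitian_tensor m p (X \<omega>)" using assms by auto
  note Xint = assms(6)
  note bm = assms(7)
  note pb1 = assms(8) and pb2 = assms(9)
  note ind = assms(10)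
  note int1 = assms(11) and int2 = assms(12)
  have Xm: "(\<lambda>\<omega>. X \<omega> i j k) \<in> borel_measurable M" if "i < m" "j < m" "k < p" for i j k
    using Xint that by (auto intro: borel_measurable_integrable)
  define F where "F c \<omega> = Re (tTr m p (texp m p (Tg A X c 0 \<omega> \<omega>)))" for c \<omega>
  define h1 where "h1 \<omega> = tTr m p (texp m p (\<lambda>i j k. A i j k + X \<omega> i j k))" for \<omega>
  define h2 where "h2 \<omega> = tTr m p (texp m p (\<lambda>i j k. A i j k + complex_of_real (2 * \<beta> \<omega>) * X \<omega> i j k))" for \<omega>
  have h1T: "h1 \<omega> = tTr m p (texp m p (Tg A X 1 0 \<omega> \<omega>))" for \<omega>
    unfolding h1_def Tg_def by simp
  have h2T: "h2 \<omega> = tTr m p (texp m p (Tg A X (2 * \<beta> \<omega>) 0 \<omega> \<omega>))" for \<omega>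
    unfolding h2_def Tg_def by simp
  have hT: "hermitian_tensor m p (Tg A X c1 c2 \<omega> \<omega>')" if "\<omega> \<in> space M" "\<omega>' \<in> space M" for c1 c2 \<omega> \<omega>'
    using hA hX that by (intro herm_Tg) auto
  have Fnn: "0 \<le> F c \<omega>" if "\<omega> \<in> space M" for c \<omega>
    unfolding F_def using hT[OF that that] by (rule tr_real(2)[OF m p])
  have Fm: "(\<lambda>\<omega>. F c \<omega>) \<in> borel_measurable M" for c
  proof -
    have "(\<lambda>\<omega>. tTr m p (texp m p (Tg A X c 0 \<omega> \<omega>))) \<in> borel_measurable M" by (rule meas_Tg(1)[OF m p Xm])
    thus ?thesis unfolding F_def by measurable
  qed
  have Fhalf: "(\<integral>\<^sup>+\<omega>. ennreal (F c \<omega> / 2) \<partial>M) = ennreal (1/2) * (\<integral>\<^sup>+\<omega>. ennreal (F c \<omega>) \<partial>M)" for c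
  proof -
    have "(\<integral>\<^sup>+\<omega>. ennreal (F c \<omega> / 2) \<partial>M) = (\<integral>\<^sup>+\<omega>. ennreal (1/2) * ennreal (F c \<omega>) \<partial>M)"
    proof (intro nn_integral_cong)
      fix \<omega> assume \<omega>: "\<omega> \<in> space M"
      have "ennreal (F c \<omega> / 2) = ennreal (1/2 * F c \<omega>)" by simp
      also have "\<dots> = ennreal (1/2) * ennreal (F c \<omega>)" by (rule ennreal_mult) (use Fnn \<omega> in auto)
      finally show "ennreal (F c \<omega> / 2) = ennreal (1/2) * ennreal (F c \<omega>)" .
    qed
    also have "\<dots> = ennreal (1/2) * (\<integral>\<^sup>+\<omega>. ennreal (F c \<omega>) \<partial>M)"
      by (rule nn_integral_cmult) (use Fm in measurable)
    finally show ?thesis .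
  qed
  have chain1: "(\<integral>\<^sup>+\<omega>. ennreal (F 1 \<omega>) \<partial>M)
      \<le> (\<integral>\<^sup>+\<omega>. ennreal (F 2 \<omega> / 2) \<partial>M) + (\<integral>\<^sup>+\<omega>. ennreal (F (-2) \<omega> / 2) \<partial>M)"
  proof -
    have "(\<integral>\<^sup>+\<omega>. ennreal (F 1 \<omega>) \<partial>M)
        \<le> (\<integral>\<^sup>+\<omega>. (\<integral>\<^sup>+\<omega>'. ennreal (Re (tTr m p (texp m p (Tg A X 1 (-1) \<omega> \<omega>')))) \<partial>M) \<partial>M)"
      unfolding F_def by (intro nn_integral_mono jensen_step[OF assms(1) m p hA hX Xint])
    also have "\<dots> \<le> (\<integral>\<^sup>+\<omega>. (\<integral>\<^sup>+\<omega>'. (ennreal (F 2 \<omega> / 2) + ennreal (F (-2) \<omega>' / 2)) \<partial>M) \<partial>M)"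
    proof (rule nn_integral_mono, rule nn_integral_mono)
      fix \<omega> \<omega>' assume \<omega>: "\<omega> \<in> space M" and \<omega>': "\<omega>' \<in> space M"
      have "Re (tTr m p (texp m p (Tg A X 1 (-1) \<omega> \<omega>'))) \<le> F 2 \<omega> / 2 + F (-2) \<omega>' / 2"
        unfolding F_def using hX \<omega> \<omega>' by (intro mid_step[OF m p hA]) auto
      hence "ennreal (Re (tTr m p (texp m p (Tg A X 1 (-1) \<omega> \<omega>')))) \<le> ennreal (F 2 \<omega> / 2 + F (-2) \<omega>' / 2)"
        by (rule ennreal_leI)
      also have "\<dots> = ennreal (F 2 \<omega> / 2) + ennreal (F (-2) \<omega>' / 2)"
        using Fnn \<omega> \<omega>' by (intro ennreal_plus) auto
      finally show "ennreal (Re (tTr m p (texp m p (Tg A X 1 (-1) \<omega> \<omega>')))) \<le> ennreal (F 2 \<omega> / 2) + ennreal (F (-2) \<omega>' / 2)" .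
    qed
    also have "\<dots> = (\<integral>\<^sup>+\<omega>. (ennreal (F 2 \<omega> / 2) + (\<integral>\<^sup>+\<omega>'. ennreal (F (-2) \<omega>' / 2) \<partial>M)) \<partial>M)"
    proof (intro nn_integral_cong)
      fix \<omega>
      have "(\<integral>\<^sup>+\<omega>'. (ennreal (F 2 \<omega> / 2) + ennreal (F (-2) \<omega>' / 2)) \<partial>M)
          = (\<integral>\<^sup>+\<omega>'. ennreal (F 2 \<omega> / 2) \<partial>M) + (\<integral>\<^sup>+\<omega>'. ennreal (F (-2) \<omega>' / 2) \<partial>M)"
      proof -
        have f: "(\<lambda>\<omega>'. ennreal (F (-2) \<omega>' / 2)) \<in> borel_measurable M" using Fm by measurable
        have c: "(\<lambda>\<omega>'::'w. ennreal (F 2 \<omega> / 2)) \<in> borel_measurable M" by simp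
        show ?thesis by (rule nn_integral_add[OF c f])
      qed
      also have "(\<integral>\<^sup>+\<omega>'. ennreal (F 2 \<omega> / 2) \<partial>M) = ennreal (F 2 \<omega> / 2)"
        by (simp add: P.emeasure_space_1)
      finally show "(\<integral>\<^sup>+\<omega>'. (ennreal (F 2 \<omega> / 2) + ennreal (F (-2) \<omega>' / 2)) \<partial>M)
          = ennreal (F 2 \<omega> / 2) + (\<integral>\<^sup>+\<omega>'. ennreal (F (-2) \<omega>' / 2) \<partial>M)" .
    qed
    also have "\<dots> = (\<integral>\<^sup>+\<omega>. ennreal (F 2 \<omega> / 2) \<partial>M) + (\<integral>\<^sup>+\<omega>. (\<integral>\<^sup>+\<omega>'. ennreal (F (-2) \<omega>' / 2) \<partial>M) \<partial>M)"
    proof -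
      have f: "(\<lambda>\<omega>. ennreal (F 2 \<omega> / 2)) \<in> borel_measurable M" using Fm by measurable
      have c: "(\<lambda>\<omega>::'w. \<integral>\<^sup>+\<omega>'. ennreal (F (-2) \<omega>' / 2) \<partial>M) \<in> borel_measurable M" by simp
      show ?thesis by (rule nn_integral_add[OF f c])
    qed
    also have "(\<integral>\<^sup>+\<omega>. (\<integral>\<^sup>+\<omega>'. ennreal (F (-2) \<omega>' / 2) \<partial>M) \<partial>M) = (\<integral>\<^sup>+\<omega>'. ennreal (F (-2) \<omega>' / 2) \<partial>M)"
      by (simp add: P.emeasure_space_1)
    finally show ?thesis .
  qed
  have S1: "{\<omega>\<in>space M. \<beta> \<omega> = 1} \<in> sets M" and S2: "{\<omega>\<in>space M. \<beta> \<omega> = -1} \<in> sets M"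
    using bm by measurable
  have "P.prob ({\<omega>\<in>space M. \<beta> \<omega> = 1} \<union> {\<omega>\<in>space M. \<beta> \<omega> = -1}) = P.prob {\<omega>\<in>space M. \<beta> \<omega> = 1} + P.prob {\<omega>\<in>space M. \<beta> \<omega> = -1}"
    by (rule P.finite_measure_Union[OF S1 S2]) auto
  also have "\<dots> = 1" using pb1 pb2 by simp
  finally have "AE \<omega> in M. \<omega> \<in> {\<omega>\<in>space M. \<beta> \<omega> = 1} \<union> {\<omega>\<in>space M. \<beta> \<omega> = -1}"
    by (rule P.AE_prob_1)
  hence AEb: "AE \<omega> in M. \<beta> \<omega> = 1 \<or> \<beta> \<omega> = -1" by auto
  have e1: "emeasure M {\<omega>\<in>space M. \<beta> \<omega> = 1} = ennreal (1/2)"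
    by (simp only: P.emeasure_eq_measure pb1)
  have e2: "emeasure M {\<omega>\<in>space M. \<beta> \<omega> = -1} = ennreal (1/2)"
    by (simp only: P.emeasure_eq_measure pb2)
  have indm: "(\<lambda>\<omega>. ennreal (indicator {v} (\<beta> \<omega>) * F c \<omega>)) \<in> borel_measurable M" for v c
    using Fm bm by measurable
  have chain2: "(\<integral>\<^sup>+\<omega>. ennreal (Re (h2 \<omega>)) \<partial>M)
      = (\<integral>\<^sup>+\<omega>. ennreal (F 2 \<omega> / 2) \<partial>M) + (\<integral>\<^sup>+\<omega>. ennreal (F (-2) \<omega> / 2) \<partial>M)"
  proof -
    have "(\<integral>\<^sup>+\<omega>. ennreal (Re (h2 \<omega>)) \<partial>M)
        = (\<integral>\<^sup>+\<omega>. (ennreal (indicator {1} (\<beta> \<omega>) * F 2 \<omega>) + ennreal (indicator {-1} (\<beta> \<omega>) * F (-2) \<omega>)) \<partial>M)"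
    proof (rule nn_integral_cong_AE)
      show "AE \<omega> in M. ennreal (Re (h2 \<omega>)) = ennreal (indicator {1} (\<beta> \<omega>) * F 2 \<omega>) + ennreal (indicator {-1} (\<beta> \<omega>) * F (-2) \<omega>)"
        using AEb by eventually_elim (auto simp: h2T F_def)
    qed
    also have "\<dots> = (\<integral>\<^sup>+\<omega>. ennreal (indicator {1} (\<beta> \<omega>) * F 2 \<omega>) \<partial>M) + (\<integral>\<^sup>+\<omega>. ennreal (indicator {-1} (\<beta> \<omega>) * F (-2) \<omega>) \<partial>M)"
      by (rule nn_integral_add[OF indm indm])
    also have "(\<integral>\<^sup>+\<omega>. ennreal (indicator {1} (\<beta> \<omega>) * F 2 \<omega>) \<partial>M) = ennreal (1/2) * (\<integral>\<^sup>+\<omega>. ennreal (F 2 \<omega>) \<partial>M)"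
      unfolding F_def using indep_step[OF assms(1) m p hA hX Xm bm ind, of 1 2] e1 by simp
    also have "(\<integral>\<^sup>+\<omega>. ennreal (indicator {-1} (\<beta> \<omega>) * F (-2) \<omega>) \<partial>M) = ennreal (1/2) * (\<integral>\<^sup>+\<omega>. ennreal (F (-2) \<omega>) \<partial>M)"
      unfolding F_def using indep_step[OF assms(1) m p hA hX Xm bm ind, of "-1" "-2"] e2 by simp
    finally show ?thesis by (simp add: Fhalf)
  qed
  have Im1: "Im (\<integral>\<omega>. h1 \<omega> \<partial>M) = 0"
  proof -
    have "Im (\<integral>\<omega>. h1 \<omega> \<partial>M) = (\<integral>\<omega>. Im (h1 \<omega>) \<partial>M)" using int1 unfolding h1_def by (rule integral_Im[symmetric])
    also have "\<dots> = (\<integral>\<omega>. 0 \<partial>M)" unfolding h1T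
      by (intro Bochner_Integration.integral_cong refl tr_real(1)[OF m p] hT)
    finally show ?thesis by simp
  qed
  have Im2: "Im (\<integral>\<omega>. h2 \<omega> \<partial>M) = 0"
  proof -
    have "Im (\<integral>\<omega>. h2 \<omega> \<partial>M) = (\<integral>\<omega>. Im (h2 \<omega>) \<partial>M)" using int2 unfolding h2_def by (rule integral_Im[symmetric])
    also have "\<dots> = (\<integral>\<omega>. 0 \<partial>M)" unfolding h2T
      by (intro Bochner_Integration.integral_cong refl tr_real(1)[OF m p] hT)
    finally show ?thesis by simp
  qed
  have int1': "integrable M h1"
  proof -
    have "h1 = (\<lambda>\<omega>. tTr m p (texp m p (\<lambda>i j k. A i j k + X \<omega> i j k)))" by (rule ext) (simp add: h1_def)
    thus ?thesis using int1 by simp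
  qed
  have int2': "integrable M h2"
  proof -
    have "h2 = (\<lambda>\<omega>. tTr m p (texp m p (\<lambda>i j k. A i j k + complex_of_real (2 * \<beta> \<omega>) * X \<omega> i j k)))"
      by (rule ext) (simp add: h2_def)
    thus ?thesis using int2 by simp
  qed
  have Reh1: "Re (h1 \<omega>) = F 1 \<omega>" for \<omega> by (simp add: h1T F_def)
  have Reh2: "Re (h2 \<omega>) = F (2 * \<beta> \<omega>) \<omega>" for \<omega> by (simp add: h2T F_def)
  have Re1: "ennreal (Re (\<integral>\<omega>. h1 \<omega> \<partial>M)) = (\<integral>\<^sup>+\<omega>. ennreal (F 1 \<omega>) \<partial>M)"
  proof -
    have "Re (\<integral>\<omega>. h1 \<omega> \<partial>M) = (\<integral>\<omega>. Re (h1 \<omega>) \<partial>M)" using int1' by (rule integral_Re[symmetric])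
    moreover have "ennreal (\<integral>\<omega>. Re (h1 \<omega>) \<partial>M) = (\<integral>\<^sup>+\<omega>. ennreal (Re (h1 \<omega>)) \<partial>M)"
      by (rule nn_integral_eq_integral[symmetric, OF integrable_Re[OF int1']]) (rule AE_I2, simp add: Reh1 Fnn)
    ultimately show ?thesis by (simp add: Reh1)
  qed
  have Re2: "ennreal (Re (\<integral>\<omega>. h2 \<omega> \<partial>M)) = (\<integral>\<^sup>+\<omega>. ennreal (Re (h2 \<omega>)) \<partial>M)"
  proof -
    have "Re (\<integral>\<omega>. h2 \<omega> \<partial>M) = (\<integral>\<omega>. Re (h2 \<omega>) \<partial>M)" using int2' by (rule integral_Re[symmetric])
    moreover have "ennreal (\<integral>\<omega>. Re (h2 \<omega>) \<partial>M) = (\<integral>\<^sup>+\<omega>. ennreal (Re (h2 \<omega>)) \<partial>M)"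
      by (rule nn_integral_eq_integral[symmetric, OF integrable_Re[OF int2']]) (rule AE_I2, simp add: Reh2 Fnn)
    ultimately show ?thesis by simp
  qed
  have "ennreal (Re (\<integral>\<omega>. h1 \<omega> \<partial>M)) \<le> ennreal (Re (\<integral>\<omega>. h2 \<omega> \<partial>M))"
    unfolding Re1 Re2 chain2 by (rule chain1)
  moreover have "0 \<le> Re (\<integral>\<omega>. h2 \<omega> \<partial>M)"
  proof -
    have "Re (\<integral>\<omega>. h2 \<omega> \<partial>M) = (\<integral>\<omega>. Re (h2 \<omega>) \<partial>M)" using int2' by (rule integral_Re[symmetric])
    also have "\<dots> \<ge> 0" by (intro integral_nonneg_AE AE_I2) (simp add: Reh2 Fnn)
    finally show ?thesis .
  qed
  ultimately have "Re (\<integral>\<omega>. h1 \<omega> \<partial>M) \<le> Re (\<integral>\<omega>. h2 \<omega> \<partial>M)" by (simp add: ennreal_le_iff)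
  then show ?thesis using Im1 Im2 unfolding less_eq_complex_def h1_def h2_def by simp
qed

end
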